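(* For any $\mathcal{L}^S$-theory $\Gamma$, $\Gamma+\Sigma+\Sigma_1$ is consistent if and only if $\Gamma+\Sigma^*+\Sigma_1^*$ is consistent.
   Context: $\mathcal{L}$ is a countable first-order language containing a binary symbol $<$; $\mathcal{L}^S$ is $\mathcal{L}$ with Skolem function symbols and $T_{\mathrm{skolem}}$ the theory saying they are Skolem functions; "term" means $\mathcal{L}^S$-term. $\lambda$ is a singular cardinal, $\eta=\mathrm{cf}(\lambda)$, $\langle\mu_i;i<\eta\rangle$ increasing cardinals with limit $\lambda$, $C=\{c_{ij}\mid i<\eta,j<\mu_i\}$ and $C^*=\{c_{ij}\mid i,j<\omega\}$ sets of new constants. For a set $D$ of such doubly indexed constants (constants below range over $D$, and in every expression $\tau(c_{m_1n_1},\dots,c_{m_kn_k})$ the constants are strictly increasing lexicographically in the index pairs), define: items (i) $T_{\mathrm{skolem}}$ plus axioms that $<$ is a linear order; (ii) $c_{ij}<c_{kl}$ iff $(i,j)<(k,l)$ lexicographically; (iii) $\tau(c_{i_1j_1},\dots,c_{i_nj_n})<c_{ij}$ whenever $i_1,\dots,i_n<i$. The theory $\Sigma_1$ over $D$ is (i)–(iii) plus: (iv) for $i_n>1$, any $j$, any $u\ge i_n$, any $l_1,\dots,l_{n-q}$: if $\tau(c_{i_1j_1},\dots,c_{i_nj_n})<c_{(i_n-1)j}$ then $\tau(\bar c,c_{i_{q+1}j_{q+1}},\dots,c_{i_nj_n})=\tau(\bar c,c_{ul_1},\dots,c_{ul_{n-q}})$, with $q$ greatest such that $i_q\ne i_n$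 ($q=0$ if none) and $\bar c=\langle c_{i_1j_1},\dots,c_{i_qj_q}\rangle$. The theory $\Sigma$ over $D$ is (i)–(iii) plus: (iv) for any $u<i_n$, any $v$ and any $l_{m+1},\dots,l_n$: if $\tau(c_{i_1j_1},\dots,c_{i_nj_n})<c_{uv}$ then $\tau(\bar c,c_{i_{m+1}j_{m+1}},\dots,c_{i_nj_n})=\tau(\bar c,c_{i_{m+1}l_{m+1}},\dots,c_{i_nl_n})$, with $m$ the smallest integer such that $i_{m+1}>u$ and $\bar c=\langle c_{i_1j_1},\dots,c_{i_mj_m}\rangle$. $\Sigma,\Sigma_1$ denote these theories over $C$; $\Sigma^*,\Sigma_1^*$ denote them over $C^*$. *)

theory Defs
  imports Main "HOL-Library.Countable"
begin

datatype 's trm = Var nat | Fun 's "'s trm list"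

datatype ('s,'r) fm =
    FEq "'s trm" "'s trm"
  | FRel 'r "'s trm list"
  | FFalse
  | FImp "('s,'r) fm" "('s,'r) fm"
  | FAll nat "('s,'r) fm"

definition FNeg :: "('s,'r) fm \<Rightarrow> ('s,'r) fm" where
  "FNeg \<phi> = FImp \<phi> FFalse"

definition FEx :: "nat \<Rightarrow> ('s,'r) fm \<Rightarrow> ('s,'r) fm" where
  "FEx v \<phi> = FNeg (FAll v (FNeg \<phi>))"

primrec fvt :: "'s trm \<Rightarrow> nat set" where
  "fvt (Var n) = {n}"
| "fvt (Fun s ts) = \<Union> (set (map fvt ts))"

primrec fvf :: "('s,'r) fm \<Rightarrow> nat set" where
  "fvf (FEq t u) = fvt t \<union> fvt u"
| "fvf (FRel r ts) = \<Union> (set (map fvt ts))"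
| "fvf FFalse = {}"
| "fvf (FImp \<phi> \<psi>) = fvf \<phi> \<union> fvf \<psi>"
| "fvf (FAll v \<phi>) = fvf \<phi> - {v}"

text \<open>Function symbols of L^S: the symbols of L, plus a Skolem function symbol
  Sk phi v for every L^S-formula phi and variable v (for the formula EX v. phi);
  its arguments are the free variables of EX v. phi in increasing order.\<close>

datatype ('f,'r) ssym = Orig 'f | Sk "(('f,'r) ssym, 'r) fm" nat

definition skargs :: "nat \<Rightarrow> ('s,'r) fm \<Rightarrow> nat list" where
  "skargs v \<phi> = sorted_list_of_set (fvf (FEx v \<phi>))"

fun sar :: "('f \<Rightarrow> nat) \<Rightarrow> ('f,'r) ssym \<Rightarrow> nat" where
  "sar af (Orig f) = af f"
| "sar af (Sk \<phi> v) = length (skargs v \<phi>)"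

inductive wfs :: "('f \<Rightarrow> nat) \<Rightarrow> ('r \<Rightarrow> nat) \<Rightarrow> ('f,'r) ssym \<Rightarrow> bool"
  and wft :: "('f \<Rightarrow> nat) \<Rightarrow> ('r \<Rightarrow> nat) \<Rightarrow> ('f,'r) ssym trm \<Rightarrow> bool"
  and wff :: "('f \<Rightarrow> nat) \<Rightarrow> ('r \<Rightarrow> nat) \<Rightarrow> (('f,'r) ssym, 'r) fm \<Rightarrow> bool"
  for af ar where
  "wfs af ar (Orig f)"
| "wff af ar \<phi> \<Longrightarrow> wfs af ar (Sk \<phi> v)"
| "wft af ar (Var n)"
| "wfs af ar s \<Longrightarrow> length ts = sar af s \<Longrightarrow> (\<forall>t\<in>set ts. wft af ar t) \<Longrightarrow> wft af ar (Fun s ts)"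
| "wft af ar t \<Longrightarrow> wft af ar u \<Longrightarrow> wff af ar (FEq t u)"
| "length ts = ar r \<Longrightarrow> (\<forall>t\<in>set ts. wft af ar t) \<Longrightarrow> wff af ar (FRel r ts)"
| "wff af ar FFalse"
| "wff af ar \<phi> \<Longrightarrow> wff af ar \<psi> \<Longrightarrow> wff af ar (FImp \<phi> \<psi>)"
| "wff af ar \<phi> \<Longrightarrow> wff af ar (FAll v \<phi>)"

primrec evalt :: "('s \<Rightarrow> 'a list \<Rightarrow> 'a) \<Rightarrow> (nat \<Rightarrow> 'a) \<Rightarrow> 's trm \<Rightarrow> 'a" where
  "evalt F e (Var n) = e n"
| "evalt F e (Fun s ts) = F s (map (evalt F e) ts)"

primrec satf :: "'a set \<Rightarrow> ('s \<Rightarrow> 'a list \<Rightarrow> 'a) \<Rightarrow> ('r \<Rightarrow> 'a list \<Rightarrow> bool)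
                 \<Rightarrow> (nat \<Rightarrow> 'a) \<Rightarrow> ('s,'r) fm \<Rightarrow> bool" where
  "satf D F R e (FEq t u) = (evalt F e t = evalt F e u)"
| "satf D F R e (FRel r ts) = R r (map (evalt F e) ts)"
| "satf D F R e FFalse = False"
| "satf D F R e (FImp \<phi> \<psi>) = (satf D F R e \<phi> \<longrightarrow> satf D F R e \<psi>)"
| "satf D F R e (FAll v \<phi>) = (\<forall>a\<in>D. satf D F R (e(v := a)) \<phi>)"

definition is_structure :: "'a set \<Rightarrow> ('s \<Rightarrow> 'a list \<Rightarrow> 'a) \<Rightarrow> bool" where
  "is_structure D F \<longleftrightarrow> D \<noteq> {} \<and> (\<forall>s as. set as \<subseteq> D \<longrightarrow> F s as \<in> D)"

definition models :: "'a set \<Rightarrow> ('s \<Rightarrow> 'a list \<Rightarrow> 'a) \<Rightarrow> ('r \<Rightarrow> 'a list \<Rightarrow> bool)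
                      \<Rightarrow> ('s,'r) fm \<Rightarrow> bool" where
  "models D F R \<phi> \<longleftrightarrow> (\<forall>e. range e \<subseteq> D \<longrightarrow> satf D F R e \<phi>)"

definition skolem_ok :: "('f \<Rightarrow> nat) \<Rightarrow> ('r \<Rightarrow> nat) \<Rightarrow> 'a set
     \<Rightarrow> (('f,'r) ssym \<Rightarrow> 'a list \<Rightarrow> 'a) \<Rightarrow> ('r \<Rightarrow> 'a list \<Rightarrow> bool) \<Rightarrow> bool" where
  "skolem_ok af ar D F R \<longleftrightarrow>
     (\<forall>\<phi> v e. wff af ar \<phi> \<longrightarrow> range e \<subseteq> D \<longrightarrow>
        (\<exists>a\<in>D. satf D F R (e(v := a)) \<phi>) \<longrightarrow>
        satf D F R (e(v := F (Sk \<phi> v) (map e (skargs v \<phi>)))) \<phi>)"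

definition linord :: "'a set \<Rightarrow> ('r \<Rightarrow> 'a list \<Rightarrow> bool) \<Rightarrow> 'r \<Rightarrow> bool" where
  "linord D R lt \<longleftrightarrow>
     (\<forall>a\<in>D. \<not> R lt [a, a]) \<and>
     (\<forall>a\<in>D. \<forall>b\<in>D. \<forall>c\<in>D. R lt [a, b] \<longrightarrow> R lt [b, c] \<longrightarrow> R lt [a, c]) \<and>
     (\<forall>a\<in>D. \<forall>b\<in>D. a \<noteq> b \<longrightarrow> R lt [a, b] \<or> R lt [b, a])"

text \<open>Index pairs (i,j) range over a set P of pairs of a linearly ordered index type;
  c (i,j) is the interpretation of the constant c_ij.\<close>

definition lexless :: "'i::linorder \<times> 'i \<Rightarrow> 'i \<times> 'i \<Rightarrow> bool" where
  "lexless p q \<longleftrightarrow> fst p < fst q \<or> (fst p = fst q \<and> snd p < snd q)"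

text \<open>Value of tau(c_{m1 n1},...,c_{mk nk}): variable t is replaced by the t-th constant.\<close>

definition valc :: "('s \<Rightarrow> 'a list \<Rightarrow> 'a) \<Rightarrow> ('i \<times> 'i \<Rightarrow> 'a) \<Rightarrow> 's trm \<Rightarrow> ('i \<times> 'i) list \<Rightarrow> 'a" where
  "valc F c \<tau> cs = evalt F (\<lambda>t. c (cs ! t)) \<tau>"

definition admissible :: "('f \<Rightarrow> nat) \<Rightarrow> ('r \<Rightarrow> nat) \<Rightarrow> ('i::linorder \<times> 'i) set
     \<Rightarrow> ('f,'r) ssym trm \<Rightarrow> ('i \<times> 'i) list \<Rightarrow> bool" where
  "admissible af ar P \<tau> cs \<longleftrightarrow>
     wft af ar \<tau> \<and> fvt \<tau> \<subseteq> {..<length cs} \<and> set cs \<subseteq> P \<and> sorted_wrt lexless cs"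

definition sig_ii :: "('i::linorder \<times> 'i) set \<Rightarrow> ('r \<Rightarrow> 'a list \<Rightarrow> bool) \<Rightarrow> 'r
     \<Rightarrow> ('i \<times> 'i \<Rightarrow> 'a) \<Rightarrow> bool" where
  "sig_ii P R lt c \<longleftrightarrow> (\<forall>p\<in>P. \<forall>q\<in>P. R lt [c p, c q] \<longleftrightarrow> lexless p q)"

definition sig_iii :: "('f \<Rightarrow> nat) \<Rightarrow> ('r \<Rightarrow> nat) \<Rightarrow> ('i::linorder \<times> 'i) set
     \<Rightarrow> (('f,'r) ssym \<Rightarrow> 'a list \<Rightarrow> 'a) \<Rightarrow> ('r \<Rightarrow> 'a list \<Rightarrow> bool) \<Rightarrow> 'r
     \<Rightarrow> ('i \<times> 'i \<Rightarrow> 'a) \<Rightarrow> bool" where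
  "sig_iii af ar P F R lt c \<longleftrightarrow>
     (\<forall>\<tau> cs p. admissible af ar P \<tau> cs \<longrightarrow> p \<in> P \<longrightarrow> (\<forall>q\<in>set cs. fst q < fst p) \<longrightarrow>
        R lt [valc F c \<tau> cs, c p])"

definition sig_iv :: "('f \<Rightarrow> nat) \<Rightarrow> ('r \<Rightarrow> nat) \<Rightarrow> ('i::linorder \<times> 'i) set
     \<Rightarrow> (('f,'r) ssym \<Rightarrow> 'a list \<Rightarrow> 'a) \<Rightarrow> ('r \<Rightarrow> 'a list \<Rightarrow> bool) \<Rightarrow> 'r
     \<Rightarrow> ('i \<times> 'i \<Rightarrow> 'a) \<Rightarrow> bool" where
  "sig_iv af ar P F R lt c \<longleftrightarrow>
     (\<forall>\<tau> cs u v ls m cs'.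
        admissible af ar P \<tau> cs \<longrightarrow> cs \<noteq> [] \<longrightarrow> u < fst (last cs) \<longrightarrow> (u, v) \<in> P \<longrightarrow>
        R lt [valc F c \<tau> cs, c (u, v)] \<longrightarrow>
        m = length (takeWhile (\<lambda>q. fst q \<le> u) cs) \<longrightarrow>
        length ls = length cs - m \<longrightarrow>
        cs' = take m cs @ map2 (\<lambda>q l. (fst q, l)) (drop m cs) ls \<longrightarrow>
        set cs' \<subseteq> P \<longrightarrow> sorted_wrt lexless cs' \<longrightarrow>
        valc F c \<tau> cs = valc F c \<tau> cs')"

text \<open>Index arithmetic for Sigma_1: "i > 1" means at least two indices lie below i;
  "w = i - 1" means w is the immediate predecessor of i.\<close>

definition gt1 :: "'i::linorder \<Rightarrow> bool" where
  "gt1 i \<longleftrightarrow> (\<exists>a b. a < b \<and> b < i)"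

definition ipred :: "'i::linorder \<Rightarrow> 'i \<Rightarrow> bool" where
  "ipred w i \<longleftrightarrow> w < i \<and> \<not> (\<exists>y. w < y \<and> y < i)"

definition sig1_iv :: "('f \<Rightarrow> nat) \<Rightarrow> ('r \<Rightarrow> nat) \<Rightarrow> ('i::linorder \<times> 'i) set
     \<Rightarrow> (('f,'r) ssym \<Rightarrow> 'a list \<Rightarrow> 'a) \<Rightarrow> ('r \<Rightarrow> 'a list \<Rightarrow> bool) \<Rightarrow> 'r
     \<Rightarrow> ('i \<times> 'i \<Rightarrow> 'a) \<Rightarrow> bool" where
  "sig1_iv af ar P F R lt c \<longleftrightarrow>
     (\<forall>\<tau> cs w j u ls q cs'.
        admissible af ar P \<tau> cs \<longrightarrow> cs \<noteq> [] \<longrightarrow> gt1 (fst (last cs)) \<longrightarrow>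
        ipred w (fst (last cs)) \<longrightarrow> (w, j) \<in> P \<longrightarrow> fst (last cs) \<le> u \<longrightarrow>
        R lt [valc F c \<tau> cs, c (w, j)] \<longrightarrow>
        q = length (takeWhile (\<lambda>p. fst p \<noteq> fst (last cs)) cs) \<longrightarrow>
        length ls = length cs - q \<longrightarrow>
        cs' = take q cs @ map (Pair u) ls \<longrightarrow>
        set cs' \<subseteq> P \<longrightarrow> sorted_wrt lexless cs' \<longrightarrow>
        valc F c \<tau> cs = valc F c \<tau> cs')"

text \<open>All function symbols of the combined languages L^S + C and L^S + C*.\<close>

datatype ('f,'r,'o) asym = LS "('f,'r) ssym" | CC 'o 'o | CS nat nat

definition model_of :: "('f \<Rightarrow> nat) \<Rightarrow> ('r \<Rightarrow> nat) \<Rightarrow> 'r \<Rightarrow> (('f,'r) ssym,'r) fm set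
     \<Rightarrow> ('i::linorder \<times> 'i) set \<Rightarrow> ('i \<times> 'i \<Rightarrow> ('f,'r,'o) asym)
     \<Rightarrow> ('f,'r,'o) asym set \<Rightarrow> (('f,'r,'o) asym \<Rightarrow> ('f,'r,'o) asym list \<Rightarrow> ('f,'r,'o) asym)
     \<Rightarrow> ('r \<Rightarrow> ('f,'r,'o) asym list \<Rightarrow> bool) \<Rightarrow> bool" where
  "model_of af ar lt \<Gamma> P csym D F R \<longleftrightarrow>
     (let FL = (\<lambda>s. F (LS s)); c = (\<lambda>p. F (csym p) []) in
      is_structure D F \<and> skolem_ok af ar D FL R \<and> linord D R lt \<and>
      (\<forall>\<phi>\<in>\<Gamma>. models D FL R \<phi>) \<and>
      sig_ii P R lt c \<and> sig_iii af ar P FL R lt c \<and>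
      sig_iv af ar P FL R lt c \<and> sig1_iv af ar P FL R lt c)"

text \<open>Consistency is taken semantically (has a model; equivalent by completeness).
  By downward Loewenheim--Skolem it suffices to consider models whose universe is a
  subset of the symbol type, which has cardinality at least that of the language.\<close>

definition consistent_C :: "('f \<Rightarrow> nat) \<Rightarrow> ('r \<Rightarrow> nat) \<Rightarrow> 'r \<Rightarrow> 'o::wellorder \<Rightarrow> ('o \<Rightarrow> 'o)
     \<Rightarrow> (('f,'r) ssym,'r) fm set \<Rightarrow> bool" where
  "consistent_C af ar lt eta mu \<Gamma> \<longleftrightarrow>
     (\<exists>(D :: ('f,'r,'o) asym set) F R.
        model_of af ar lt \<Gamma> {(i, j). i < eta \<and> j < mu i} (\<lambda>(i, j). CC i j) D F R)"

definition consistent_Cstar :: "('f \<Rightarrow> nat) \<Rightarrow> ('r \<Rightarrow> nat) \<Rightarrow> 'r \<Rightarrow> (('f,'r) ssym,'r) fm set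
     \<Rightarrow> 'o itself \<Rightarrow> bool" where
  "consistent_Cstar af ar lt \<Gamma> _ \<longleftrightarrow>
     (\<exists>(D :: ('f,'r,'o) asym set) F R.
        model_of af ar lt \<Gamma> (UNIV :: (nat \<times> nat) set) (\<lambda>(i, j). CS i j) D F R)"

section \<open>Cardinals as initial ordinals in a well-ordered type\<close>

definition is_cardinal :: "'o::wellorder \<Rightarrow> bool" where
  "is_cardinal y \<longleftrightarrow> (\<forall>z<y. \<not> (\<exists>f. bij_betw f {x. x < z} {x. x < y}))"

definition cofinality :: "'o::wellorder \<Rightarrow> 'o" where
  "cofinality lam = (LEAST d. \<exists>g. (\<forall>x<d. g x < lam) \<and> (\<forall>y<lam. \<exists>x<d. y \<le> g x))"

definition singular_cardinal :: "'o::wellorder \<Rightarrow> bool" where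
  "singular_cardinal lam \<longleftrightarrow> is_cardinal lam \<and> infinite {x. x < lam} \<and> cofinality lam < lam"

end

theory Submission
  imports Defs "HOL-Library.Infinite_Set"
begin

instance trm :: (countable) countable by countable_datatype
instance fm :: (countable,countable) countable by countable_datatype
instance ssym :: (countable,countable) countable by countable_datatype

section \<open>Ultrafilters\<close>

definition ultra :: "'a filter \<Rightarrow> bool" where
  "ultra U \<longleftrightarrow> U \<noteq> bot \<and> (\<forall>P. eventually P U \<or> eventually (\<lambda>x. \<not> P x) U)"

lemma ultra_maximal:
  assumes "U \<noteq> bot" and max: "\<And>G. G \<noteq> bot \<Longrightarrow> G \<le> U \<Longrightarrow> U = G"
  shows "ultra U"
  unfolding ultra_def
proof (intro conjI allI assms(1) disjCI)
  fix P assume "\<not> eventually (\<lambda>x. \<not> P x) U"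
  then have "inf U (principal {x. P x}) \<noteq> bot"
    by (simp add: trivial_limit_def eventually_inf_principal not_eventually)
  then have F: "U = inf U (principal {x. P x})"
    by (rule max) simp
  show "eventually P U"
    by (subst F) (simp add: eventually_inf_principal)
qed

lemma ex_ultra:
  fixes F :: "'a filter"
  assumes F: "F \<noteq> bot"
  shows "\<exists>U\<le>F. ultra U"
proof -
  let ?X = "{G. G \<noteq> bot \<and> G \<le> F}"
  let ?R = "{(b, a). a \<noteq> bot \<and> a \<le> b \<and> b \<le> F}"
  have bot_notin_R: "c \<in> Chains ?R \<Longrightarrow> bot \<notin> c" for c
    by (auto simp: Chains_def)
  have [simp]: "Field ?R = ?X"
    by (auto simp: Field_def bot_unique)
  have "\<exists>m\<in>Field ?R. \<forall>a\<in>Field ?R. (m, a) \<in> ?R \<longrightarrow> a = m" (is "\<exists>m\<in>?A. ?B m")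
  proof (rule Zorns_po_lemma)
    show "Partial_order ?R"
      by (auto simp: partial_order_on_def preorder_on_def
          antisym_def refl_on_def trans_def Field_def bot_unique)
    show "\<exists>u\<in>Field ?R. \<forall>a\<in>C. (a, u) \<in> ?R" if C: "C \<in> Chains ?R" for C
    proof (simp, intro exI conjI ballI)
      have Inf_C: "Inf C \<noteq> bot" "Inf C \<le> F" if "C \<noteq> {}"
      proof -
        from C that have "Inf C = bot \<longleftrightarrow> (\<exists>x\<in>C. x = bot)"
          unfolding trivial_limit_def by (intro eventually_Inf_base) (auto simp: Chains_def)
        with C show "Inf C \<noteq> bot"
          by (simp add: bot_notin_R)
        from that obtain x where "x \<in> C" by auto
        with C show "Inf C \<le> F"
          by (auto intro!: Inf_lower2[of x] simp: Chains_def)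
      qed
      then have [simp]: "inf F (Inf C) = (if C = {} then F else Inf C)"
        using C by (auto simp add: inf_absorb2)
      from C show "inf F (Inf C) \<noteq> bot"
        by (simp add: F Inf_C)
      from C show "inf F (Inf C) \<le> F"
        by (simp add: Chains_def Inf_C F)
      with C show "inf F (Inf C) \<le> x" "x \<le> F" if "x \<in> C" for x
        using that  by (auto intro: Inf_lower simp: Chains_def)
    qed
  qed
  then obtain U where U: "U \<in> ?A" "?B U" ..
  show ?thesis
  proof
    from U show "U \<le> F \<and> ultra U"
      by (auto intro!: ultra_maximal)
  qed
qed

lemma ultra_not: "ultra U \<Longrightarrow> eventually (\<lambda>x. \<not> P x) U \<longleftrightarrow> \<not> eventually P U"
proof -
  assume u: "ultra U"
  show ?thesis
  proof
    assume a: "eventually (\<lambda>x. \<not> P x) U"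
    show "\<not> eventually P U"
    proof
      assume "eventually P U"
      with a have "eventually (\<lambda>x. False) U" by (rule eventually_elim2) auto
      with u show False by (simp add: ultra_def trivial_limit_def)
    qed
  next
    assume "\<not> eventually P U" with u show "eventually (\<lambda>x. \<not> P x) U"
      by (auto simp: ultra_def)
  qed
qed
lemma ultra_imp: "ultra U \<Longrightarrow> eventually (\<lambda>x. P x \<longrightarrow> Q x) U \<longleftrightarrow> (eventually P U \<longrightarrow> eventually Q U)"
proof -
  assume u: "ultra U"
  show ?thesis
  proof
    assume "eventually (\<lambda>x. P x \<longrightarrow> Q x) U"
    then show "eventually P U \<longrightarrow> eventually Q U"
      using eventually_mp by blast
  next
    assume h: "eventually P U \<longrightarrow> eventually Q U"
    show "eventually (\<lambda>x. P x \<longrightarrow> Q x) U"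
    proof (cases "eventually P U")
      case True then have "eventually Q U" using h by blast
      then show ?thesis by (rule eventually_mono) blast
    next
      case False then have "eventually (\<lambda>x. \<not> P x) U" using ultra_not[OF u] by blast
      then show ?thesis by (rule eventually_mono) blast
    qed
  qed
qed

lemma ultra_disj: "ultra U \<Longrightarrow> eventually (\<lambda>x. P x \<or> Q x) U \<longleftrightarrow> (eventually P U \<or> eventually Q U)"
proof -
  assume u: "ultra U"
  have "eventually (\<lambda>x. P x \<or> Q x) U = eventually (\<lambda>x. \<not> P x \<longrightarrow> Q x) U" by (simp add: disj_commute[of "P _"] imp_conv_disj)
  also have "\<dots> = (eventually (\<lambda>x. \<not> P x) U \<longrightarrow> eventually Q U)" by (rule ultra_imp[OF u])
  also have "\<dots> = (eventually P U \<or> eventually Q U)" using ultra_not[OF u, of P] by auto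
  finally show ?thesis .
qed

lemma ultra_const: "ultra U \<Longrightarrow> eventually (\<lambda>x. Q) U \<longleftrightarrow> Q"
  unfolding ultra_def by (cases Q) (auto simp: trivial_limit_def)


section \<open>Encoding terms\<close>

fun encN :: "('a \<times> 'a \<Rightarrow> 'a) \<Rightarrow> (nat \<Rightarrow> 'a) \<Rightarrow> 'a list \<Rightarrow> 'a" where
  "encN pr nn [] = pr (nn 0, nn 0)"
| "encN pr nn (x # xs) = pr (nn 1, pr (x, encN pr nn xs))"

lemma encN_inj:
  assumes "inj pr" "inj nn"
  shows "encN pr nn xs = encN pr nn ys \<Longrightarrow> xs = ys"
proof (induction xs arbitrary: ys)
  case Nil then show ?case using assms
    by (cases ys) (auto simp: inj_eq)
next
  case (Cons x xs) then show ?case using assms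
    by (cases ys) (auto simp: inj_eq)
qed

fun encT :: "('a \<times> 'a \<Rightarrow> 'a) \<Rightarrow> (nat \<Rightarrow> 'a) \<Rightarrow> ('s \<Rightarrow> 'a) \<Rightarrow> 's trm \<Rightarrow> 'a" where
  "encT pr nn es (Var n) = pr (nn 0, nn n)"
| "encT pr nn es (Fun s ts) = pr (nn 1, pr (es s, encN pr nn (map (encT pr nn es) ts)))"

lemma encT_inj:
  assumes "inj pr" "inj nn" "inj es"
  shows "encT pr nn es t = encT pr nn es t' \<Longrightarrow> t = t'"
proof (induction t arbitrary: t')
  case (Var n) then show ?case using assms
    by (cases t') (auto simp: inj_eq)
next
  case (Fun s ts)
  then show ?case
  proof (cases t')
    case (Var m) then show ?thesis using Fun assms by (auto simp: inj_eq)
  next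
    case (Fun s' ts')
    with Fun.prems assms have 1: "s = s'" and 2: "encN pr nn (map (encT pr nn es) ts) = encN pr nn (map (encT pr nn es) ts')"
      by (auto simp: inj_eq)
    from 2 have 3: "map (encT pr nn es) ts = map (encT pr nn es) ts'"
      by (rule encN_inj[OF assms(1,2)])
    from 3 have "length ts = length ts'" by (metis length_map)
    from this 3 Fun.IH have "ts = ts'"
      by (induction ts ts' rule: list_induct2) auto
    then show ?thesis using 1 Fun by simp
  qed
qed

lemma ex_term_inj:
  fixes \<iota> :: "'j \<Rightarrow> 'o"
  assumes inf: "infinite (UNIV :: 'o set)" and ii: "inj \<iota>"
  shows "\<exists>h :: (('f::countable,'r::countable) ssym + ('j \<times> 'j)) trm \<Rightarrow> ('f,'r,'o) asym. inj h"
proof -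
  obtain b :: "'o \<times> 'o \<Rightarrow> 'o" where "bij_betw b (UNIV \<times> UNIV) UNIV"
    using card_of_Times_same_infinite[OF inf] card_of_ordIso by blast
  then have ipr: "inj b" by (simp add: bij_betw_def)
  obtain nn :: "nat \<Rightarrow> 'o" where inn: "inj nn"
    using infinite_countable_subset[OF inf] by blast
  define es :: "(('f,'r) ssym + ('j \<times> 'j)) \<Rightarrow> 'o" where
    "es = (\<lambda>s. case s of Inl x \<Rightarrow> b (nn 0, nn (to_nat x)) | Inr (p, q) \<Rightarrow> b (nn 1, b (\<iota> p, \<iota> q)))"
  have ies: "inj es"
  proof (rule injI)
    fix x y assume "es x = es y"
    then show "x = y" unfolding es_def using ipr inn ii
      by (cases x; cases y) (auto simp: inj_eq split: prod.splits)
  qed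
  have "inj (\<lambda>t. CC (encT b nn es t) (encT b nn es t) :: ('f,'r,'o) asym)"
    by (rule injI) (auto dest: encT_inj[OF ipr inn ies])
  then show ?thesis by blast
qed

definition emb :: "('i::linorder \<times> 'i) set \<Rightarrow> ('j::linorder \<times> 'j) set \<Rightarrow> ('j \<times> 'j \<Rightarrow> 'i \<times> 'i) \<Rightarrow> bool" where
  "emb P S g \<longleftrightarrow> (\<forall>p\<in>S. g p \<in> P) \<and> (\<forall>p\<in>S. \<forall>q\<in>S. lexless (g p) (g q) \<longleftrightarrow> lexless p q) \<and>
     (\<forall>p\<in>S. \<forall>q\<in>S. fst (g p) < fst (g q) \<longleftrightarrow> fst p < fst q) \<and>
     (\<forall>p\<in>S. \<forall>q\<in>S. gt1 (fst q) \<longrightarrow> ipred (fst p) (fst q) \<longrightarrow> gt1 (fst (g q)) \<and> ipred (fst (g p)) (fst (g q)))"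

lemma emb_fst_eq:
  assumes "emb P S g" "p \<in> S" "q \<in> S"
  shows "fst (g p) = fst (g q) \<longleftrightarrow> fst p = fst q"
proof -
  have a: "fst (g p) < fst (g q) \<longleftrightarrow> fst p < fst q" and b: "fst (g q) < fst (g p) \<longleftrightarrow> fst q < fst p"
    using assms unfolding emb_def by blast+
  show ?thesis using a b by (metis less_irrefl linorder_neqE)
qed

lemma emb_fst_le:
  assumes "emb P S g" "p \<in> S" "q \<in> S"
  shows "fst (g p) \<le> fst (g q) \<longleftrightarrow> fst p \<le> fst q"
proof -
  have b: "fst (g q) < fst (g p) \<longleftrightarrow> fst q < fst p"
    using assms unfolding emb_def by blast+
  show ?thesis using b by (metis not_le)
qed

lemma emb_P: "emb P S g \<Longrightarrow> p \<in> S \<Longrightarrow> g p \<in> P"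
  unfolding emb_def by blast

lemma emb_lt: "emb P S g \<Longrightarrow> p \<in> S \<Longrightarrow> q \<in> S \<Longrightarrow> fst (g p) < fst (g q) \<longleftrightarrow> fst p < fst q"
  unfolding emb_def by blast

lemma emb_ip: "emb P S g \<Longrightarrow> p \<in> S \<Longrightarrow> q \<in> S \<Longrightarrow> gt1 (fst q) \<Longrightarrow> ipred (fst p) (fst q)
   \<Longrightarrow> gt1 (fst (g q)) \<and> ipred (fst (g p)) (fst (g q))"
  unfolding emb_def by blast

lemma emb_set: "emb P S g \<Longrightarrow> set xs \<subseteq> S \<Longrightarrow> set (map g xs) \<subseteq> P"
  using emb_P by fastforce

lemma emb_sorted:
  assumes "emb P S g" "set cs \<subseteq> S"
  shows "sorted_wrt lexless (map g cs) \<longleftrightarrow> sorted_wrt lexless cs"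
  using assms(2)
proof (induction cs)
  case Nil then show ?case by simp
next
  case (Cons a cs)
  have "\<forall>y\<in>set cs. lexless (g a) (g y) \<longleftrightarrow> lexless a y"
    using assms(1) Cons.prems unfolding emb_def by auto
  then show ?case using Cons by auto
qed

lemma emb_admissible:
  assumes "emb P S g" "admissible af ar P' \<tau> cs" "set cs \<subseteq> S"
  shows "admissible af ar P \<tau> (map g cs)"
  using assms emb_sorted[OF assms(1,3)] unfolding admissible_def emb_def by auto

lemma length_takeWhile_less: "\<exists>x\<in>set xs. \<not> P x \<Longrightarrow> length (takeWhile P xs) < length xs"
  by (induction xs) auto

lemma emb_map2:
  assumes "emb P S g" "length xs = length ys" "set xs \<subseteq> S" "set (map2 (\<lambda>q l. (fst q, l)) xs ys) \<subseteq> S"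
  shows "map g (map2 (\<lambda>q l. (fst q, l)) xs ys) =
         map2 (\<lambda>q l. (fst q, l)) (map g xs) (map (snd \<circ> g) (map2 (\<lambda>q l. (fst q, l)) xs ys))"
  using assms(2-)
proof (induction xs ys rule: list_induct2)
  case Nil then show ?case by simp
next
  case (Cons x xs y ys)
  have "fst (g (fst x, y)) = fst (g x)"
    using emb_fst_eq[OF assms(1), of "(fst x, y)" x] Cons.prems by auto
  then show ?case using Cons by (auto simp: prod_eq_iff)
qed

fun sub :: "(nat \<Rightarrow> ('s + 'x) trm) \<Rightarrow> 's trm \<Rightarrow> ('s + 'x) trm" where
  "sub e (Var n) = e n"
| "sub e (Fun s ts) = Fun (Inl s) (map (sub e) ts)"

lemma evalt_cong: "(\<forall>n\<in>fvt t. e n = e' n) \<Longrightarrow> evalt F e t = evalt F e' t"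
  by (induction t) (auto intro!: map_cong arg_cong[where f="F _"])

inductive_cases wffEqE: "wff af ar (FEq t u)"
inductive_cases wffRelE: "wff af ar (FRel r ts)"
inductive_cases wffImpE: "wff af ar (FImp \<phi> \<psi>)"
inductive_cases wffAllE: "wff af ar (FAll v \<phi>)"

locale tctx =
  fixes af :: "'f \<Rightarrow> nat" and ar :: "'r \<Rightarrow> nat" and lt :: 'r
    and \<Gamma> :: "(('f,'r) ssym,'r) fm set"
    and P :: "('i::linorder \<times> 'i) set" and csym :: "'i \<times> 'i \<Rightarrow> ('f,'r,'o) asym"
    and D :: "('f,'r,'o) asym set" and F and R
    and P' :: "('j::linorder \<times> 'j) set" and csym' :: "'j \<times> 'j \<Rightarrow> ('f,'r,'o) asym"
    and h :: "(('f,'r) ssym + ('j \<times> 'j)) trm \<Rightarrow> ('f,'r,'o) asym"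
    and U :: "('j \<times> 'j) set filter" and g :: "('j \<times> 'j) set \<Rightarrow> 'j \<times> 'j \<Rightarrow> 'i \<times> 'i"
    and d0 :: "('f,'r,'o) asym"
  assumes M: "model_of af ar lt \<Gamma> P csym D F R"
    and hinj: "inj h" and cinj: "inj csym'" and cLS: "\<And>p s. csym' p \<noteq> LS s"
    and U: "ultra U"
    and base: "\<And>A. finite A \<Longrightarrow> A \<subseteq> P' \<Longrightarrow> eventually (\<lambda>S. A \<subseteq> S \<and> emb P S (g S)) U"
    and d0: "d0 \<in> D" and wfG: "\<forall>\<phi>\<in>\<Gamma>. wff af ar \<phi>"
begin

definition "c p = F (csym p) []"
definition "FL = (\<lambda>s. F (LS s))"
definition "cS S p = (if p \<in> S then c (g S p) else d0)"
definition "FS S s xs = (case s of Inl s0 \<Rightarrow> F (LS s0) xs | Inr p \<Rightarrow> cS S p)"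
definition "evS S t = evalt (FS S) (\<lambda>_. d0) t"
definition "eqv t t' = eventually (\<lambda>S. evS S t = evS S t') U"
definition "canon t = (SOME t'. eqv t' t)"
definition "rep t = h (canon t)"
definition "D' = range rep"
definition "invr a = (SOME t. rep t = a)"
definition "F' s as = (if (\<exists>s0. s = LS s0) then rep (Fun (Inl (THE s0. s = LS s0)) (map invr as))
    else if s \<in> range csym' then rep (Fun (Inr (the_inv csym' s)) []) else rep (Var 0))"
definition "R' r as = eventually (\<lambda>S. R r (map (evS S \<circ> invr) as)) U"
definition "FL' = (\<lambda>s. F' (LS s))"
definition "c' p = F' (csym' p) []"
definition "kc p = (Fun (Inr p) [] :: (('f,'r) ssym + ('j \<times> 'j)) trm)"

lemma M_struct: "is_structure D F" and M_sk: "skolem_ok af ar D FL R" and M_lin: "linord D R lt"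
  and M_G: "\<forall>\<phi>\<in>\<Gamma>. models D FL R \<phi>" and M_ii: "sig_ii P R lt c"
  and M_iii: "sig_iii af ar P FL R lt c" and M_iv: "sig_iv af ar P FL R lt c"
  and M1_iv: "sig1_iv af ar P FL R lt c"
  using M unfolding model_of_def Let_def FL_def c_def[abs_def] by auto

lemma c_in: "c p \<in> D"
  using M_struct unfolding is_structure_def c_def by auto

lemma cS_in: "cS S p \<in> D"
  using c_in d0 unfolding cS_def by auto

lemma evS_in: "evS S t \<in> D"
  unfolding evS_def
proof (induction t)
  case (Var x) then show ?case using d0 by simp
next
  case (Fun s ts) show ?case
  proof (cases s)
    case (Inl x)
    have "set (map (evalt (FS S) (\<lambda>_. d0)) ts) \<subseteq> D" using Fun by auto
    then show ?thesis using M_struct Inl unfolding is_structure_def FS_def by simp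
  next
    case (Inr p) then show ?thesis using cS_in unfolding FS_def by simp
  qed
qed

lemma evS_Inl: "evS S (Fun (Inl s) ts) = FL s (map (evS S) ts)"
  unfolding evS_def FS_def FL_def by simp

lemma evS_kc: "evS S (kc p) = cS S p"
  unfolding evS_def FS_def kc_def by simp

lemma eqv_refl: "eqv t t"
  unfolding eqv_def by simp

lemma eqv_sym: "eqv t t' \<Longrightarrow> eqv t' t"
  unfolding eqv_def by (auto elim: eventually_mono)

lemma eqv_trans: "eqv t t' \<Longrightarrow> eqv t' t'' \<Longrightarrow> eqv t t''"
  unfolding eqv_def by (auto elim: eventually_elim2)

lemma canon_eqv: "eqv (canon t) t"
  unfolding canon_def by (rule someI[of _ t]) (rule eqv_refl)

lemma canon_cong: "eqv t t' \<Longrightarrow> canon t = canon t'"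
proof -
  assume a: "eqv t t'"
  have "(\<lambda>x. eqv x t) = (\<lambda>x. eqv x t')"
    using a eqv_sym eqv_trans by (metis)
  then show ?thesis unfolding canon_def by simp
qed

lemma rep_eq: "rep t = rep t' \<longleftrightarrow> eqv t t'"
proof
  assume "rep t = rep t'"
  then have "canon t = canon t'" unfolding rep_def using hinj by (simp add: inj_eq)
  then show "eqv t t'" using canon_eqv eqv_sym eqv_trans by metis
next
  assume "eqv t t'" then show "rep t = rep t'" unfolding rep_def using canon_cong by simp
qed

lemma rep_inv: "a \<in> D' \<Longrightarrow> rep (invr a) = a"
proof -
  assume "a \<in> D'"
  then have "\<exists>t. rep t = a" unfolding D'_def by auto
  then show ?thesis unfolding invr_def by (rule someI_ex)
qed

lemma inv_rep: "eqv (invr (rep t)) t"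
proof -
  have "rep (invr (rep t)) = rep t" by (rule rep_inv) (simp add: D'_def)
  then show ?thesis using rep_eq by blast
qed

lemma eqv_list: "list_all2 eqv ts ts' \<Longrightarrow> eventually (\<lambda>S. map (evS S) ts = map (evS S) ts') U"
proof (induction rule: list_all2_induct)
  case Nil then show ?case by simp
next
  case (Cons x xs y ys)
  then show ?case unfolding eqv_def by (auto elim: eventually_elim2)
qed

lemma eqv_Fun: "list_all2 eqv ts ts' \<Longrightarrow> eqv (Fun s ts) (Fun s ts')"
proof -
  assume "list_all2 eqv ts ts'"
  then have "eventually (\<lambda>S. map (evS S) ts = map (evS S) ts') U" by (rule eqv_list)
  then show ?thesis unfolding eqv_def
    by (rule eventually_mono) (simp add: evS_def[abs_def])
qed

lemma inv_rep_list: "list_all2 eqv (map (invr \<circ> rep) ts) ts"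
  by (induction ts) (auto simp: inv_rep)

lemma F'_LS: "F' (LS s) as = rep (Fun (Inl s) (map invr as))"
  unfolding F'_def by simp

lemma c'_kc: "c' p = rep (kc p)"
proof -
  have "\<not> (\<exists>s0. csym' p = LS s0)" using cLS by auto
  then show ?thesis unfolding c'_def F'_def kc_def using the_inv_f_f[OF cinj] by auto
qed

lemma F'_in: "F' s as \<in> D'"
  unfolding F'_def D'_def by auto

lemma evalt_sub: "evalt FL' (rep \<circ> e) t = rep (sub e t)"
proof (induction t)
  case (Var x) then show ?case by simp
next
  case (Fun s ts)
  have "evalt FL' (rep \<circ> e) (Fun s ts) = F' (LS s) (map (rep \<circ> sub e) ts)"
    unfolding FL'_def by (simp, rule arg_cong[where f="F' _"], rule map_cong[OF refl])
       (use Fun.IH in \<open>simp add: FL'_def comp_def\<close>)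
  also have "\<dots> = rep (Fun (Inl s) (map (invr \<circ> rep) (map (sub e) ts)))"
    by (simp add: F'_LS comp_assoc)
  also have "\<dots> = rep (Fun (Inl s) (map (sub e) ts))"
    using rep_eq eqv_Fun inv_rep_list by blast
  also have "\<dots> = rep (sub e (Fun s ts))" by simp
  finally show ?case .
qed

lemma evS_sub: "evS S (sub e t) = evalt FL (evS S \<circ> e) t"
proof (induction t)
  case (Var x) then show ?case by simp
next
  case (Fun s ts) then show ?case by (simp add: evS_Inl cong: map_cong)
qed

lemma R'_rep: "R' r (map rep ts) \<longleftrightarrow> eventually (\<lambda>S. R r (map (evS S) ts)) U"
proof -
  have "eventually (\<lambda>S. map (evS S \<circ> invr) (map rep ts) = map (evS S) ts) U"
    using eqv_list[OF inv_rep_list] by (rule eventually_mono) (simp only: map_map comp_assoc)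
  then have "eventually (\<lambda>S. R r (map (evS S \<circ> invr) (map rep ts)) = R r (map (evS S) ts)) U"
    by (rule eventually_mono) (erule arg_cong)
  then show ?thesis unfolding R'_def by (rule eventually_subst)
qed

end

context tctx begin

lemma R'_rep2: "R' r (map (rep \<circ> f) ts) \<longleftrightarrow> eventually (\<lambda>S. R r (map (evS S \<circ> f) ts)) U"
  using R'_rep[of r "map f ts"] by (simp add: comp_def)

lemma wff_neg: "wff af ar \<phi> \<Longrightarrow> wff af ar (FNeg \<phi>)"
  unfolding FNeg_def by (auto intro: wfs_wft_wff.intros)

lemma los: "wff af ar \<phi> \<Longrightarrow> satf D' FL' R' (rep \<circ> e) \<phi> \<longleftrightarrow> eventually (\<lambda>S. satf D FL R (evS S \<circ> e) \<phi>) U"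
proof (induction \<phi> arbitrary: e)
  case (FEq t u)
  show ?case by (simp only: satf.simps evalt_sub rep_eq eqv_def evS_sub)
next
  case (FRel r ts)
  have m: "map (evalt FL' (rep \<circ> e)) ts = map (rep \<circ> sub e) ts"
    by (rule map_cong[OF refl]) (simp only: evalt_sub comp_apply)
  have m2: "\<And>S. map (evS S \<circ> sub e) ts = map (evalt FL (evS S \<circ> e)) ts"
    by (rule map_cong[OF refl]) (simp only: evS_sub comp_apply)
  show ?case by (simp only: satf.simps m R'_rep2 m2)
next
  case FFalse
  then show ?case using ultra_const[OF U, of False] by simp
next
  case (FImp \<phi> \<psi>)
  then have "wff af ar \<phi>" "wff af ar \<psi>" by (auto elim: wffImpE)
  then show ?case using FImp.IH ultra_imp[OF U] by simp
next
  case (FAll v \<phi>)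
  have w: "wff af ar \<phi>" using FAll.prems by (auto elim: wffAllE)
  have upd: "\<And>t. (rep \<circ> e)(v := rep t) = rep \<circ> (e(v := t))" by (auto simp: fun_eq_iff)
  have upd2: "\<And>S t. (evS S \<circ> e)(v := evS S t) = evS S \<circ> (e(v := t))" by (auto simp: fun_eq_iff)
  have "satf D' FL' R' (rep \<circ> e) (FAll v \<phi>) \<longleftrightarrow> (\<forall>t. satf D' FL' R' (rep \<circ> (e(v:=t))) \<phi>)"
    by (auto simp: D'_def upd)
  also have "\<dots> \<longleftrightarrow> (\<forall>t. eventually (\<lambda>S. satf D FL R (evS S \<circ> (e(v:=t))) \<phi>) U)"
    using FAll.IH w by blast
  also have "\<dots> \<longleftrightarrow> eventually (\<lambda>S. \<forall>a\<in>D. satf D FL R ((evS S \<circ> e)(v:=a)) \<phi>) U"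
  proof
    assume A: "\<forall>t. eventually (\<lambda>S. satf D FL R (evS S \<circ> (e(v:=t))) \<phi>) U"
    show "eventually (\<lambda>S. \<forall>a\<in>D. satf D FL R ((evS S \<circ> e)(v:=a)) \<phi>) U"
    proof (rule ccontr)
      define tsk where "tsk = Fun (Inl (Sk (FNeg \<phi>) v)) (map e (skargs v (FNeg \<phi>)))"
      assume "\<not> eventually (\<lambda>S. \<forall>a\<in>D. satf D FL R ((evS S \<circ> e)(v:=a)) \<phi>) U"
      then have "eventually (\<lambda>S. \<not> (\<forall>a\<in>D. satf D FL R ((evS S \<circ> e)(v:=a)) \<phi>)) U"
        using ultra_not[OF U] by blast
      then have B: "eventually (\<lambda>S. \<not> satf D FL R (evS S \<circ> (e(v := tsk))) \<phi>) U"
      proof (rule eventually_mono)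
        fix S assume "\<not> (\<forall>a\<in>D. satf D FL R ((evS S \<circ> e)(v:=a)) \<phi>)"
        then have "\<exists>a\<in>D. satf D FL R ((evS S \<circ> e)(v:=a)) (FNeg \<phi>)" by (auto simp: FNeg_def)
        moreover have "wff af ar (FNeg \<phi>)" using w by (rule wff_neg)
        moreover have "range (evS S \<circ> e) \<subseteq> D" using evS_in by auto
        ultimately have "satf D FL R ((evS S \<circ> e)(v := FL (Sk (FNeg \<phi>) v) (map (evS S \<circ> e) (skargs v (FNeg \<phi>))))) (FNeg \<phi>)"
          using M_sk unfolding skolem_ok_def by blast
        moreover have "evS S tsk = FL (Sk (FNeg \<phi>) v) (map (evS S \<circ> e) (skargs v (FNeg \<phi>)))"
          unfolding tsk_def by (simp add: evS_Inl)
        ultimately show "\<not> satf D FL R (evS S \<circ> (e(v := tsk))) \<phi>"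
          by (simp add: FNeg_def upd2[symmetric])
      qed
      moreover have "eventually (\<lambda>S. satf D FL R (evS S \<circ> (e(v:=tsk))) \<phi>) U" using A by blast
      ultimately have "eventually (\<lambda>S. False) U" by (rule eventually_elim2) blast
      then show False using ultra_const[OF U, of False] by simp
    qed
  next
    assume A: "eventually (\<lambda>S. \<forall>a\<in>D. satf D FL R ((evS S \<circ> e)(v:=a)) \<phi>) U"
    show "\<forall>t. eventually (\<lambda>S. satf D FL R (evS S \<circ> (e(v:=t))) \<phi>) U"
    proof
      fix t show "eventually (\<lambda>S. satf D FL R (evS S \<circ> (e(v:=t))) \<phi>) U"
        using A by (rule eventually_mono) (simp add: upd2[symmetric] evS_in)
    qed
  qed
  also have "\<dots> \<longleftrightarrow> eventually (\<lambda>S. satf D FL R (evS S \<circ> e) (FAll v \<phi>)) U"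
    by simp
  finally show ?case .
qed

lemma struct': "is_structure D' F'"
  unfolding is_structure_def using F'_in by (auto simp: D'_def)

lemma env_rep: "range e' \<subseteq> D' \<Longrightarrow> e' = rep \<circ> (invr \<circ> e')"
proof (rule ext)
  fix x assume "range e' \<subseteq> D'"
  then have "e' x \<in> D'" by auto
  then show "e' x = (rep \<circ> (invr \<circ> e')) x" using rep_inv by simp
qed

lemma skolem': "skolem_ok af ar D' FL' R'"
  unfolding skolem_ok_def
proof (intro allI impI)
  fix \<phi> v e'
  assume w: "wff af ar \<phi>" and r: "range e' \<subseteq> D'" and ex: "\<exists>a\<in>D'. satf D' FL' R' (e'(v := a)) \<phi>"
  define e where "e = invr \<circ> e'"
  have e': "e' = rep \<circ> e" unfolding e_def by (rule env_rep[OF r])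
  have upd: "\<And>t. (rep \<circ> e)(v := rep t) = rep \<circ> (e(v := t))" by (auto simp: fun_eq_iff)
  have upd2: "\<And>S t. (evS S \<circ> e)(v := evS S t) = evS S \<circ> (e(v := t))" by (auto simp: fun_eq_iff)
  from ex obtain a where a: "a \<in> D'" "satf D' FL' R' (e'(v := a)) \<phi>" by blast
  then obtain t where "a = rep t" by (auto simp: D'_def)
  with a(2) have "satf D' FL' R' ((rep \<circ> e)(v := rep t)) \<phi>" using e' by simp
  then have "satf D' FL' R' (rep \<circ> (e(v := t))) \<phi>" unfolding upd .
  then have "eventually (\<lambda>S. satf D FL R (evS S \<circ> (e(v := t))) \<phi>) U" using los[OF w] by blast
  define tsk where "tsk = Fun (Inl (Sk \<phi> v)) (map e (skargs v \<phi>))"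
  have "eventually (\<lambda>S. satf D FL R (evS S \<circ> (e(v := tsk))) \<phi>) U"
  proof (rule eventually_mono[OF \<open>eventually _ U\<close>])
    fix S assume "satf D FL R (evS S \<circ> (e(v := t))) \<phi>"
    then have "\<exists>a\<in>D. satf D FL R ((evS S \<circ> e)(v := a)) \<phi>" using evS_in upd2 by metis
    moreover have "range (evS S \<circ> e) \<subseteq> D" using evS_in by auto
    ultimately have "satf D FL R ((evS S \<circ> e)(v := FL (Sk \<phi> v) (map (evS S \<circ> e) (skargs v \<phi>)))) \<phi>"
      using M_sk w unfolding skolem_ok_def by blast
    moreover have "evS S tsk = FL (Sk \<phi> v) (map (evS S \<circ> e) (skargs v \<phi>))"
      unfolding tsk_def by (simp add: evS_Inl)
    ultimately show "satf D FL R (evS S \<circ> (e(v := tsk))) \<phi>" by (simp add: upd2[symmetric])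
  qed
  then have "satf D' FL' R' (rep \<circ> (e(v := tsk))) \<phi>" using los[OF w] by blast
  moreover have "FL' (Sk \<phi> v) (map e' (skargs v \<phi>)) = rep tsk"
    unfolding FL'_def F'_LS tsk_def e_def by (simp add: comp_def)
  ultimately show "satf D' FL' R' (e'(v := FL' (Sk \<phi> v) (map e' (skargs v \<phi>)))) \<phi>"
    by (simp add: e' upd)
qed

lemma R'_two: "R' r [rep t, rep t'] \<longleftrightarrow> eventually (\<lambda>S. R r [evS S t, evS S t']) U"
  using R'_rep[of r "[t, t']"] by simp

lemma linord': "linord D' R' lt"
  unfolding linord_def
proof (intro conjI ballI impI)
  have irr: "\<forall>a\<in>D. \<not> R lt [a, a]" and tr: "\<forall>a\<in>D. \<forall>b\<in>D. \<forall>c\<in>D. R lt [a, b] \<longrightarrow> R lt [b, c] \<longrightarrow> R lt [a, c]"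
    and tot: "\<forall>a\<in>D. \<forall>b\<in>D. a \<noteq> b \<longrightarrow> R lt [a, b] \<or> R lt [b, a]"
    using M_lin unfolding linord_def by blast+
  fix a assume "a \<in> D'"
  then obtain t where a: "a = rep t" unfolding D'_def by auto
  show "\<not> R' lt [a, a]"
  proof
    assume "R' lt [a, a]"
    then have "eventually (\<lambda>S. R lt [evS S t, evS S t]) U" using a R'_two by simp
    then have "eventually (\<lambda>S. False) U" by (rule eventually_mono) (use irr evS_in in blast)
    then show False using ultra_const[OF U, of False] by simp
  qed
next
  have tr: "\<forall>a\<in>D. \<forall>b\<in>D. \<forall>c\<in>D. R lt [a, b] \<longrightarrow> R lt [b, c] \<longrightarrow> R lt [a, c]"
    using M_lin unfolding linord_def by blast+
  fix a b c assume "a \<in> D'" "b \<in> D'" "c \<in> D'" "R' lt [a, b]" "R' lt [b, c]"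
  then obtain t1 t2 t3 where a: "a = rep t1" "b = rep t2" "c = rep t3" unfolding D'_def by auto
  have "eventually (\<lambda>S. R lt [evS S t1, evS S t2]) U" "eventually (\<lambda>S. R lt [evS S t2, evS S t3]) U"
    using a R'_two \<open>R' lt [a, b]\<close> \<open>R' lt [b, c]\<close> by auto
  then have "eventually (\<lambda>S. R lt [evS S t1, evS S t3]) U"
    by (rule eventually_elim2) (use tr evS_in in blast)
  then show "R' lt [a, c]" using a R'_two by simp
next
  have tot: "\<forall>a\<in>D. \<forall>b\<in>D. a \<noteq> b \<longrightarrow> R lt [a, b] \<or> R lt [b, a]"
    using M_lin unfolding linord_def by blast+
  fix a b assume "a \<in> D'" "b \<in> D'" "a \<noteq> b"
  then obtain t1 t2 where a: "a = rep t1" "b = rep t2" unfolding D'_def by auto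
  then have "\<not> eqv t1 t2" using \<open>a \<noteq> b\<close> rep_eq by simp
  then have "eventually (\<lambda>S. evS S t1 \<noteq> evS S t2) U" unfolding eqv_def using ultra_not[OF U] by blast
  then have "eventually (\<lambda>S. R lt [evS S t1, evS S t2] \<or> R lt [evS S t2, evS S t1]) U"
    by (rule eventually_mono) (use tot evS_in in blast)
  then show "R' lt [a, b] \<or> R' lt [b, a]" using a R'_two ultra_disj[OF U] by simp
qed

end

context tctx begin

lemma models': "\<forall>\<phi>\<in>\<Gamma>. models D' FL' R' \<phi>"
proof (intro ballI)
  fix \<phi> assume G: "\<phi> \<in> \<Gamma>"
  show "models D' FL' R' \<phi>" unfolding models_def
  proof (intro allI impI)
    fix e' :: "nat \<Rightarrow> ('f,'r,'o) asym" assume r: "range e' \<subseteq> D'"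
    have "eventually (\<lambda>S. satf D FL R (evS S \<circ> (invr \<circ> e')) \<phi>) U"
    proof (rule always_eventually, rule allI)
      fix S
      have "range (evS S \<circ> (invr \<circ> e')) \<subseteq> D" using evS_in by auto
      then show "satf D FL R (evS S \<circ> (invr \<circ> e')) \<phi>" using M_G G unfolding models_def by blast
    qed
    then have "satf D' FL' R' (rep \<circ> (invr \<circ> e')) \<phi>" using los wfG G by blast
    then show "satf D' FL' R' e' \<phi>" using env_rep[OF r] by simp
  qed
qed

lemma valc'_rep: "valc FL' c' \<tau> cs = rep (sub (\<lambda>t. kc (cs ! t)) \<tau>)"
proof -
  have "(\<lambda>t. c' (cs ! t)) = rep \<circ> (\<lambda>t. kc (cs ! t))" by (simp add: fun_eq_iff c'_kc)
  then show ?thesis unfolding valc_def by (simp add: evalt_sub)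
qed

definition "VS S \<tau> cs = evS S (sub (\<lambda>t. kc (cs ! t)) \<tau>)"

lemma VS_eq:
  assumes "set cs \<subseteq> S" "fvt \<tau> \<subseteq> {..<length cs}"
  shows "VS S \<tau> cs = valc FL c \<tau> (map (g S) cs)"
proof -
  have "VS S \<tau> cs = evalt FL (evS S \<circ> (\<lambda>t. kc (cs ! t))) \<tau>" unfolding VS_def by (rule evS_sub)
  also have "\<dots> = evalt FL (\<lambda>t. c (map (g S) cs ! t)) \<tau>"
  proof (rule evalt_cong, rule ballI)
    fix n assume "n \<in> fvt \<tau>"
    then have n: "n < length cs" using assms by auto
    then have "cs ! n \<in> S" using assms by auto
    then show "(evS S \<circ> (\<lambda>t. kc (cs ! t))) n = c (map (g S) cs ! n)"
      using n by (simp add: evS_kc cS_def)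
  qed
  finally show ?thesis unfolding valc_def .
qed

lemma R'_vc: "R' lt [valc FL' c' \<tau> cs, c' p] \<longleftrightarrow> eventually (\<lambda>S. R lt [VS S \<tau> cs, cS S p]) U"
  by (simp only: valc'_rep c'_kc R'_two VS_def evS_kc)

lemma R'_cc: "R' lt [c' p, c' q] \<longleftrightarrow> eventually (\<lambda>S. R lt [cS S p, cS S q]) U"
  by (simp only: c'_kc R'_two evS_kc)

lemma vc_eq: "valc FL' c' \<tau> cs = valc FL' c' \<tau> cs' \<longleftrightarrow> eventually (\<lambda>S. VS S \<tau> cs = VS S \<tau> cs') U"
  by (simp only: valc'_rep rep_eq eqv_def VS_def)

lemma sig_ii': "sig_ii P' R' lt c'"
  unfolding sig_ii_def
proof (intro ballI)
  fix p q assume pq: "p \<in> P'" "q \<in> P'"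
  have "eventually (\<lambda>S. {p,q} \<subseteq> S \<and> emb P S (g S)) U" by (rule base) (use pq in auto)
  then have "eventually (\<lambda>S. R lt [cS S p, cS S q] = lexless p q) U"
  proof (rule eventually_mono)
    fix S assume a: "{p,q} \<subseteq> S \<and> emb P S (g S)"
    then have "g S p \<in> P" "g S q \<in> P" "lexless (g S p) (g S q) \<longleftrightarrow> lexless p q"
      unfolding emb_def by auto
    then show "R lt [cS S p, cS S q] = lexless p q"
      using M_ii a unfolding sig_ii_def cS_def by auto
  qed
  then have "R' lt [c' p, c' q] \<longleftrightarrow> eventually (\<lambda>S. lexless p q) U"
    unfolding R'_cc by (rule eventually_subst)
  then show "R' lt [c' p, c' q] \<longleftrightarrow> lexless p q" using ultra_const[OF U] by simp
qed

lemma sig_iii': "sig_iii af ar P' FL' R' lt c'"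
  unfolding sig_iii_def
proof (intro allI impI)
  fix \<tau> cs p
  assume adm: "admissible af ar P' \<tau> cs" and p: "p \<in> P'" and lt: "\<forall>q\<in>set cs. fst q < fst p"
  have "eventually (\<lambda>S. insert p (set cs) \<subseteq> S \<and> emb P S (g S)) U"
    by (rule base) (use adm p in \<open>auto simp: admissible_def\<close>)
  then have "eventually (\<lambda>S. R lt [VS S \<tau> cs, cS S p]) U"
  proof (rule eventually_mono)
    fix S assume a: "insert p (set cs) \<subseteq> S \<and> emb P S (g S)"
    then have em: "emb P S (g S)" and cs: "set cs \<subseteq> S" and pS: "p \<in> S" by auto
    have fv: "fvt \<tau> \<subseteq> {..<length cs}" using adm by (simp add: admissible_def)
    have "admissible af ar P \<tau> (map (g S) cs)" by (rule emb_admissible[OF em adm cs])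
    moreover have "g S p \<in> P" using em pS unfolding emb_def by auto
    moreover have "\<forall>q\<in>set (map (g S) cs). fst q < fst (g S p)"
    proof
      fix x assume "x \<in> set (map (g S) cs)"
      then obtain q where q: "q \<in> set cs" "x = g S q" by auto
      have "fst (g S q) < fst (g S p) \<longleftrightarrow> fst q < fst p"
        using em pS cs q(1) unfolding emb_def by blast
      then show "fst x < fst (g S p)" using q lt by auto
    qed
    ultimately have "R lt [valc FL c \<tau> (map (g S) cs), c (g S p)]"
      using M_iii unfolding sig_iii_def by blast
    then show "R lt [VS S \<tau> cs, cS S p]" using VS_eq[OF cs fv] pS by (simp add: cS_def)
  qed
  then show "R' lt [valc FL' c' \<tau> cs, c' p]" by (simp only: R'_vc)
qed

end

context tctx begin

lemma sig_iv': "sig_iv af ar P' FL' R' lt c'"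
  unfolding sig_iv_def
proof (intro allI impI)
  fix \<tau> cs u v ls m cs'
  assume adm: "admissible af ar P' \<tau> cs" and ne: "cs \<noteq> []" and ul: "u < fst (last cs)"
    and uv: "(u, v) \<in> P'"
    and Rh: "R' lt [valc FL' c' \<tau> cs, c' (u, v)]" and m: "m = length (takeWhile (\<lambda>q. fst q \<le> u) cs)"
    and lls: "length ls = length cs - m"
    and cs': "cs' = take m cs @ map2 (\<lambda>q l. (fst q, l)) (drop m cs) ls"
    and cs'P: "set cs' \<subseteq> P'" and srt: "sorted_wrt lexless cs'"
  define A where "A = set cs \<union> {(u,v)} \<union> set cs'"
  have fA: "finite A" "A \<subseteq> P'" using adm uv cs'P by (auto simp: A_def admissible_def)
  have "eventually (\<lambda>S. (A \<subseteq> S \<and> emb P S (g S)) \<and> R lt [VS S \<tau> cs, cS S (u,v)]) U"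
    using eventually_conj[OF base[OF fA] Rh[unfolded R'_vc]] .
  then have "eventually (\<lambda>S. VS S \<tau> cs = VS S \<tau> cs') U"
  proof (rule eventually_mono)
    fix S assume "(A \<subseteq> S \<and> emb P S (g S)) \<and> R lt [VS S \<tau> cs, cS S (u,v)]"
    then have AS: "A \<subseteq> S" and em0: "emb P S (g S)" and RS: "R lt [VS S \<tau> cs, cS S (u,v)]" by auto
    define gg where "gg = g S"
    have em: "emb P S gg" using em0 gg_def by simp
    have csS: "set cs \<subseteq> S" "(u,v) \<in> S" "set cs' \<subseteq> S" using AS A_def by auto
    have fv: "fvt \<tau> \<subseteq> {..<length cs}" using adm by (simp add: admissible_def)
    have mle: "m \<le> length cs" using m length_takeWhile_le by simp
    have lcs': "length cs' = length cs" using cs' lls mle by simp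
    have adm2: "admissible af ar P \<tau> (map gg cs)" by (rule emb_admissible[OF em adm csS(1)])
    have ne2: "map gg cs \<noteq> []" using ne by simp
    have lastg: "last (map gg cs) = gg (last cs)" using ne by (simp add: last_map)
    have lastS: "last cs \<in> S" using ne csS by auto
    have "fst (gg (u,v)) < fst (gg (last cs)) \<longleftrightarrow> fst (u,v) < fst (last cs)"
      by (rule emb_lt[OF em csS(2) lastS])
    then have ul2: "fst (gg (u,v)) < fst (last (map gg cs))" using ul lastg by simp
    have uvP: "(fst (gg (u,v)), snd (gg (u,v))) \<in> P" using emb_P[OF em csS(2)] by simp
    have R2: "R lt [valc FL c \<tau> (map gg cs), c (fst (gg (u,v)), snd (gg (u,v)))]"
      using RS VS_eq[OF csS(1) fv] csS(2) by (simp add: cS_def gg_def)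
    have m2: "m = length (takeWhile (\<lambda>q. fst q \<le> fst (gg (u,v))) (map gg cs))"
    proof -
      have "takeWhile (\<lambda>q. fst q \<le> fst (gg (u,v))) (map gg cs)
          = map gg (takeWhile (\<lambda>q. fst (gg q) \<le> fst (gg (u,v))) cs)"
        by (simp add: takeWhile_map comp_def)
      also have "takeWhile (\<lambda>q. fst (gg q) \<le> fst (gg (u,v))) cs = takeWhile (\<lambda>q. fst q \<le> u) cs"
      proof (rule takeWhile_cong[OF refl])
        fix x assume "x \<in> set cs"
        then show "(fst (gg x) \<le> fst (gg (u,v))) = (fst x \<le> u)"
          using emb_fst_le[OF em _ csS(2), of x] csS(1) by auto
      qed
      finally show ?thesis using m by simp
    qed
    define ls0 where "ls0 = map (snd \<circ> gg) (drop m cs')"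
    have lls0: "length ls0 = length (map gg cs) - m" using lcs' ls0_def by simp
    have dcs': "drop m cs' = map2 (\<lambda>q l. (fst q, l)) (drop m cs) ls" using cs' mle by simp
    have tcs': "take m cs' = take m cs" using cs' mle by simp
    have eq: "map gg cs' = take m (map gg cs) @ map2 (\<lambda>q l. (fst q, l)) (drop m (map gg cs)) ls0"
    proof -
      have "map gg cs' = map gg (take m cs') @ map gg (drop m cs')"
        by (simp only: map_append[symmetric] append_take_drop_id)
      also have "map gg (drop m cs') = map2 (\<lambda>q l. (fst q, l)) (map gg (drop m cs)) ls0"
      proof -
        have s1: "set (drop m cs) \<subseteq> S" using set_drop_subset[of m cs] csS(1) by (rule subset_trans)
        have "set (drop m cs') \<subseteq> S" using set_drop_subset[of m cs'] csS(3) by (rule subset_trans)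
        then have s2: "set (map2 (\<lambda>q l. (fst q, l)) (drop m cs) ls) \<subseteq> S"
          by (simp only: dcs')
        have "length (drop m cs) = length ls" using lls by simp
        from emb_map2[OF em this s1 s2] show ?thesis unfolding ls0_def dcs' .
      qed
      finally show ?thesis by (simp only: tcs' take_map drop_map)
    qed
    have P2: "set (map gg cs') \<subseteq> P" by (rule emb_set[OF em csS(3)])
    have s2: "sorted_wrt lexless (map gg cs')" using emb_sorted[OF em csS(3)] srt by simp
    have "valc FL c \<tau> (map gg cs) = valc FL c \<tau> (map gg cs')"
      using M_iv[unfolded sig_iv_def, rule_format, OF adm2 ne2 ul2 uvP R2 m2 lls0 eq P2 s2] .
    then show "VS S \<tau> cs = VS S \<tau> cs'"
      using VS_eq[OF csS(1) fv] VS_eq[OF csS(3)] fv lcs' by (simp add: gg_def)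
  qed
  then show "valc FL' c' \<tau> cs = valc FL' c' \<tau> cs'" using vc_eq by simp
qed

lemma sig1_iv': "sig1_iv af ar P' FL' R' lt c'"
  unfolding sig1_iv_def
proof (intro allI impI)
  fix \<tau> cs w j u ls q cs'
  assume adm: "admissible af ar P' \<tau> cs" and ne: "cs \<noteq> []" and g1: "gt1 (fst (last cs))"
    and ip: "ipred w (fst (last cs))" and wj: "(w, j) \<in> P'" and ule: "fst (last cs) \<le> u"
    and Rh: "R' lt [valc FL' c' \<tau> cs, c' (w, j)]"
    and q: "q = length (takeWhile (\<lambda>p. fst p \<noteq> fst (last cs)) cs)"
    and lls: "length ls = length cs - q"
    and cs': "cs' = take q cs @ map (Pair u) ls"
    and cs'P: "set cs' \<subseteq> P'" and srt: "sorted_wrt lexless cs'"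
  define A where "A = set cs \<union> {(w,j)} \<union> set cs'"
  have fA: "finite A" "A \<subseteq> P'" using adm wj cs'P by (auto simp: A_def admissible_def)
  have qlt: "q < length cs" unfolding q using ne by (intro length_takeWhile_less) auto
  then have lsne: "ls \<noteq> []" using lls by auto
  have uhd: "(u, hd ls) \<in> set cs'" using lsne cs' by auto
  have "eventually (\<lambda>S. (A \<subseteq> S \<and> emb P S (g S)) \<and> R lt [VS S \<tau> cs, cS S (w,j)]) U"
    using eventually_conj[OF base[OF fA] Rh[unfolded R'_vc]] .
  then have "eventually (\<lambda>S. VS S \<tau> cs = VS S \<tau> cs') U"
  proof (rule eventually_mono)
    fix S assume "(A \<subseteq> S \<and> emb P S (g S)) \<and> R lt [VS S \<tau> cs, cS S (w,j)]"
    then have AS: "A \<subseteq> S" and em0: "emb P S (g S)" and RS: "R lt [VS S \<tau> cs, cS S (w,j)]" by auto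
    define gg where "gg = g S"
    have em: "emb P S gg" using em0 gg_def by simp
    have csS: "set cs \<subseteq> S" "(w,j) \<in> S" "set cs' \<subseteq> S" using AS A_def by auto
    have uS: "(u, hd ls) \<in> S" using uhd csS(3) by auto
    have fv: "fvt \<tau> \<subseteq> {..<length cs}" using adm by (simp add: admissible_def)
    have lcs': "length cs' = length cs" using cs' lls qlt by simp
    have adm2: "admissible af ar P \<tau> (map gg cs)" by (rule emb_admissible[OF em adm csS(1)])
    have ne2: "map gg cs \<noteq> []" using ne by simp
    have lastg: "last (map gg cs) = gg (last cs)" using ne by (simp add: last_map)
    have lastS: "last cs \<in> S" using ne csS by auto
    have "gt1 (fst (gg (last cs))) \<and> ipred (fst (gg (w,j))) (fst (gg (last cs)))"
      using emb_ip[OF em csS(2) lastS] g1 ip by simp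
    then have g12: "gt1 (fst (last (map gg cs)))" and ip2: "ipred (fst (gg (w,j))) (fst (last (map gg cs)))"
      using lastg by auto
    have wjP: "(fst (gg (w,j)), snd (gg (w,j))) \<in> P" using emb_P[OF em csS(2)] by simp
    have ule2: "fst (last (map gg cs)) \<le> fst (gg (u, hd ls))"
      using emb_fst_le[OF em lastS uS] ule lastg by simp
    have R2: "R lt [valc FL c \<tau> (map gg cs), c (fst (gg (w,j)), snd (gg (w,j)))]"
      using RS VS_eq[OF csS(1) fv] csS(2) by (simp add: cS_def gg_def)
    have q2: "q = length (takeWhile (\<lambda>p. fst p \<noteq> fst (last (map gg cs))) (map gg cs))"
    proof -
      have "takeWhile (\<lambda>p. fst p \<noteq> fst (last (map gg cs))) (map gg cs)
          = map gg (takeWhile (\<lambda>p. fst (gg p) \<noteq> fst (gg (last cs))) cs)"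
        by (simp add: takeWhile_map comp_def lastg)
      also have "takeWhile (\<lambda>p. fst (gg p) \<noteq> fst (gg (last cs))) cs = takeWhile (\<lambda>p. fst p \<noteq> fst (last cs)) cs"
      proof (rule takeWhile_cong[OF refl])
        fix x assume "x \<in> set cs"
        then show "(fst (gg x) \<noteq> fst (gg (last cs))) = (fst x \<noteq> fst (last cs))"
          using emb_fst_eq[OF em _ lastS, of x] csS(1) by auto
      qed
      finally show ?thesis using q by simp
    qed
    define ls0 where "ls0 = map (\<lambda>l. snd (gg (u, l))) ls"
    have lls0: "length ls0 = length (map gg cs) - q" using lls ls0_def by simp
    have eq: "map gg cs' = take q (map gg cs) @ map (Pair (fst (gg (u, hd ls)))) ls0"
    proof -
      have "map gg (map (Pair u) ls) = map (Pair (fst (gg (u, hd ls)))) ls0"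
        unfolding ls0_def
      proof (simp only: map_map, rule map_cong[OF refl])
        fix l assume l: "l \<in> set ls"
        then have "(u, l) \<in> S" using cs' csS(3) by auto
        then have "fst (gg (u, l)) = fst (gg (u, hd ls))" using emb_fst_eq[OF em _ uS] by simp
        then show "(gg \<circ> Pair u) l = (Pair (fst (gg (u, hd ls))) \<circ> (\<lambda>l. snd (gg (u, l)))) l"
          by (simp add: prod_eq_iff)
      qed
      then show ?thesis using cs' by (simp add: take_map)
    qed
    have P2: "set (map gg cs') \<subseteq> P" by (rule emb_set[OF em csS(3)])
    have s2: "sorted_wrt lexless (map gg cs')" using emb_sorted[OF em csS(3)] srt by simp
    have "valc FL c \<tau> (map gg cs) = valc FL c \<tau> (map gg cs')"
      using M1_iv[unfolded sig1_iv_def, rule_format, OF adm2 ne2 g12 ip2 wjP ule2 R2 q2 lls0 eq P2 s2] .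
    then show "VS S \<tau> cs = VS S \<tau> cs'"
      using VS_eq[OF csS(1) fv] VS_eq[OF csS(3)] fv lcs' by (simp add: gg_def)
  qed
  then show "valc FL' c' \<tau> cs = valc FL' c' \<tau> cs'" using vc_eq by simp
qed

lemma model': "model_of af ar lt \<Gamma> P' csym' D' F' R'"
proof -
  have a: "(\<lambda>s. F' (LS s)) = FL'" by (simp add: FL'_def fun_eq_iff)
  have b: "(\<lambda>p. F' (csym' p) []) = c'" by (simp add: c'_def fun_eq_iff)
  show ?thesis unfolding model_of_def Let_def a b
    using struct' skolem' linord' models' sig_ii' sig_iii' sig_iv' sig1_iv' by blast
qed

end

lemma transfer:
  fixes P :: "('i::linorder \<times> 'i) set" and csym :: "'i \<times> 'i \<Rightarrow> ('f,'r,'o) asym"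
    and P' :: "('j::linorder \<times> 'j) set" and csym' :: "'j \<times> 'j \<Rightarrow> ('f,'r,'o) asym"
    and h :: "(('f,'r) ssym + ('j \<times> 'j)) trm \<Rightarrow> ('f,'r,'o) asym"
  assumes M: "model_of af ar lt \<Gamma> P csym D F R"
    and hinj: "inj h" and cinj: "inj csym'" and cLS: "\<And>p s. csym' p \<noteq> LS s"
    and E: "\<And>S. finite S \<Longrightarrow> S \<subseteq> P' \<Longrightarrow> \<exists>g. emb P S g"
    and wfG: "\<forall>\<phi>\<in>\<Gamma>. wff af ar \<phi>"
  shows "\<exists>D' F' R'. model_of af ar lt \<Gamma> P' csym' D' F' R'"
proof -
  have "is_structure D F" using M unfolding model_of_def Let_def by auto
  then obtain d0 where d0: "d0 \<in> D" unfolding is_structure_def by auto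
  define B where "B = {A. finite A \<and> A \<subseteq> P'}"
  define X where "X = (\<lambda>A. {S. finite S \<and> A \<subseteq> S \<and> S \<subseteq> P'})"
  define F0 where "F0 = (INF A\<in>B. principal (X A))"
  have ev0: "eventually Q F0 \<longleftrightarrow> (\<exists>A\<in>B. eventually Q (principal (X A)))" for Q
    unfolding F0_def
  proof (rule eventually_INF_base)
    show "B \<noteq> {}" unfolding B_def by auto
    fix a b assume "a \<in> B" "b \<in> B"
    then have "a \<union> b \<in> B" unfolding B_def by auto
    moreover have "principal (X (a \<union> b)) \<le> inf (principal (X a)) (principal (X b))"
      unfolding X_def by auto
    ultimately show "\<exists>x\<in>B. principal (X x) \<le> inf (principal (X a)) (principal (X b))" by blast
  qed
  have "F0 \<noteq> bot"
  proof
    assume "F0 = bot"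
    then have "eventually (\<lambda>_. False) F0" by simp
    then obtain A where "A \<in> B" "eventually (\<lambda>_. False) (principal (X A))" using ev0 by blast
    then have "X A = {}" by (simp add: eventually_principal)
    moreover have "A \<in> X A" using \<open>A \<in> B\<close> unfolding X_def B_def by auto
    ultimately show False by simp
  qed
  then obtain U where UF: "U \<le> F0" and U: "ultra U" using ex_ultra by blast
  define g :: "('j \<times> 'j) set \<Rightarrow> 'j \<times> 'j \<Rightarrow> 'i \<times> 'i" where "g = (\<lambda>S. SOME g. emb P S g)"
  have base: "eventually (\<lambda>S. A \<subseteq> S \<and> emb P S (g S)) U" if "finite A" "A \<subseteq> P'" for A
  proof -
    have "eventually (\<lambda>S. S \<in> X A) F0" using ev0 that unfolding B_def
      by (auto simp: eventually_principal)
    then have "eventually (\<lambda>S. S \<in> X A) U" using UF by (rule filter_leD[rotated])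
    then show ?thesis
    proof (rule eventually_mono)
      fix S assume "S \<in> X A"
      then have "finite S" "S \<subseteq> P'" "A \<subseteq> S" unfolding X_def by auto
      then show "A \<subseteq> S \<and> emb P S (g S)" using E unfolding g_def by (metis someI_ex)
    qed
  qed
  interpret tctx af ar lt \<Gamma> P csym D F R P' csym' h U g d0
    by unfold_locales (use M hinj cinj cLS U base d0 wfG in auto)
  show ?thesis using model' by blast
qed

definition cofP :: "'o::wellorder \<Rightarrow> 'o \<Rightarrow> bool" where
  "cofP lam d \<longleftrightarrow> (\<exists>g. (\<forall>x<d. g x < lam) \<and> (\<forall>y<lam. \<exists>x<d. y \<le> g x))"

lemma cof_eq: "cofinality lam = (LEAST d. cofP lam d)"
  unfolding cofinality_def cofP_def by simp

lemma cofP_self: "cofP lam lam"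
  unfolding cofP_def by (rule exI[of _ id]) auto

lemma cofP_cof: "cofP lam (cofinality lam)"
  unfolding cof_eq by (rule LeastI[OF cofP_self])

lemma cof_le: "cofP lam d \<Longrightarrow> cofinality lam \<le> d"
  unfolding cof_eq by (rule Least_le)

lemma card_lim:
  fixes lam :: "'o::wellorder"
  assumes c: "is_cardinal lam" and inf: "infinite {x. x < lam}" and y: "y < lam"
  shows "\<exists>z. y < z \<and> z < lam"
proof (rule ccontr)
  assume "\<not> ?thesis"
  then have nz: "\<And>z. y < z \<Longrightarrow> \<not> z < lam" by blast
  have eq: "{x. x < lam} = {x. x < y} \<union> {y}"
  proof
    show "{x. x < lam} \<subseteq> {x. x < y} \<union> {y}"
    proof
      fix x assume "x \<in> {x. x < lam}"
      then have xl: "x < lam" by simp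
      have "\<not> y < x"
      proof
        assume "y < x"
        then have "\<not> x < lam" by (rule nz)
        with xl show False by contradiction
      qed
      then have "x \<le> y" by (simp only: not_less)
      then have "x < y \<or> x = y" by (rule le_imp_less_or_eq)
      then show "x \<in> {x. x < y} \<union> {y}"
      proof
        assume "x < y" then show ?thesis by (intro UnI1) simp
      next
        assume "x = y" then show ?thesis by (intro UnI2) simp
      qed
    qed
    show "{x. x < y} \<union> {y} \<subseteq> {x. x < lam}"
    proof
      fix x assume "x \<in> {x. x < y} \<union> {y}"
      then have "x \<le> y" by auto
      then show "x \<in> {x. x < lam}" using y by simp
    qed
  qed
  have "infinite ({x. x < y} \<union> {y})"
  proof
    assume "finite ({x. x < y} \<union> {y})"
    then have "finite {x. x < lam}" by (subst eq)
    with inf show False by contradiction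
  qed
  then have iy: "infinite {x. x < y}" by simp
  obtain f where "bij_betw f {x. x < y} ({x. x < y} \<union> {y})" using infinite_imp_bij_betw2[OF iy, where a=y] by blast
  then have bf: "bij_betw f {x. x < y} {x. x < lam}" using eq by simp
  have "\<forall>z<lam. \<not> (\<exists>f. bij_betw f {x. x < z} {x. x < lam})" using c unfolding is_cardinal_def .
  then have "\<not> (\<exists>f. bij_betw f {x. x < y} {x. x < lam})" using y by simp
  then show False using bf by blast
qed

lemma cof_lim:
  fixes lam :: "'o::wellorder"
  assumes c: "is_cardinal lam" and inf: "infinite {x. x < lam}" and y: "y < cofinality lam"
  shows "\<exists>z. y < z \<and> z < cofinality lam"
proof (rule ccontr)
  assume "\<not> ?thesis"
  then have le: "\<And>x. x < cofinality lam \<Longrightarrow> x \<le> y" by (meson not_le)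
  obtain g where g1: "\<forall>x<cofinality lam. g x < lam" and g2: "\<forall>z<lam. \<exists>x<cofinality lam. z \<le> g x"
    using cofP_cof[of lam] unfolding cofP_def by blast
  have gy: "g y < lam" using g1 y by blast
  obtain z'' where z'': "g y < z''" "z'' < lam" using card_lim[OF c inf gy] by blast
  have "cofP lam y" unfolding cofP_def
  proof (rule exI[of _ g], intro conjI allI impI)
    fix x assume "x < y" then show "g x < lam" using g1 y by auto
  next
    fix z assume z: "z < lam"
    define w where "w = max z z''"
    have "w < lam" using z z'' unfolding w_def by (simp add: max_def)
    then obtain x where x: "x < cofinality lam" "w \<le> g x" using g2 by blast
    have "x \<noteq> y" using x z'' unfolding w_def by (auto simp: max_def split: if_splits)
    then have "x < y" using le[OF x(1)] by simp
    moreover have "z \<le> g x" using x unfolding w_def by simp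
    ultimately show "\<exists>x<y. z \<le> g x" by blast
  qed
  then have "cofinality lam \<le> y" by (rule cof_le)
  then show False using y by simp
qed

lemma exists_inf_mu:
  fixes lam eta :: "'o::wellorder" and mu :: "'o \<Rightarrow> 'o"
  assumes sc: "singular_cardinal lam" and eta: "eta = cofinality lam"
    and a6: "\<forall>y<lam. \<exists>i<eta. y < mu i"
  shows "\<exists>i<eta. infinite {x. x < mu i}"
proof (rule ccontr)
  assume "\<not> ?thesis"
  then have fin: "\<And>i. i < eta \<Longrightarrow> finite {x. x < mu i}" by blast
  have c: "is_cardinal lam" and inf: "infinite {x. x < lam}" and lt: "eta < lam"
    using sc eta unfolding singular_cardinal_def by auto
  have finy: "finite {x. x < y}" if yl: "y < lam" for y
  proof -
    obtain i where "i < eta" "y < mu i" using a6 yl by blast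
    then have "{x. x < y} \<subseteq> {x. x < mu i}" by auto
    then show ?thesis using fin[OF \<open>i < eta\<close>] finite_subset by blast
  qed
  obtain g where g1: "\<forall>x<eta. g x < lam" and g2: "\<forall>z<lam. \<exists>x<eta. z \<le> g x"
    using cofP_cof[of lam] eta unfolding cofP_def by blast
  have fe: "finite (g ` {x. x < eta})" using finy[OF lt] by simp
  have "{x. x < lam} \<noteq> {}" using inf by (metis finite.emptyI)
  then obtain y0 where "y0 < lam" by auto
  then obtain x0 where "x0 < eta" using g2 by blast
  then have ne: "g ` {x. x < eta} \<noteq> {}" by auto
  define m where "m = Max (g ` {x. x < eta})"
  have "m \<in> g ` {x. x < eta}" unfolding m_def using fe ne by (rule Max_in)
  then have "m < lam" using g1 by auto
  then obtain z where z: "m < z" "z < lam" using card_lim[OF c inf] by blast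
  then obtain x where "x < eta" "z \<le> g x" using g2 by blast
  moreover have "g x \<le> m" unfolding m_def using fe \<open>x < eta\<close> by (intro Max_ge) auto
  ultimately show False using z by simp
qed

lemma emb_C_to_star:
  fixes lam eta :: "'o::wellorder" and mu :: "'o \<Rightarrow> 'o"
  assumes sc: "singular_cardinal lam" and eta: "eta = cofinality lam"
    and a5: "\<forall>i i'. i < i' \<and> i' < eta \<longrightarrow> mu i < mu i'"
    and a6: "\<forall>y<lam. \<exists>i<eta. y < mu i"
  shows "\<exists>g :: nat \<times> nat \<Rightarrow> 'o \<times> 'o. \<forall>S. emb {(i, j). i < eta \<and> j < mu i} S g"
proof -
  have c: "is_cardinal lam" and inf: "infinite {x. x < lam}"
    using sc unfolding singular_cardinal_def by auto
  obtain i0 where i0: "i0 < eta" "infinite {x. x < mu i0}"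
    using exists_inf_mu[OF sc eta a6] by blast
  have lim: "\<And>y. y < eta \<Longrightarrow> \<exists>z. y < z \<and> z < eta"
    using cof_lim[OF c inf] eta by blast
  define nx :: "'o \<Rightarrow> 'o" where "nx y = (LEAST z. y < z)" for y
  define x where "x n = (nx ^^ n) i0" for n
  have xS: "x (Suc n) = nx (x n)" for n unfolding x_def by simp
  have x0: "x 0 = i0" unfolding x_def by simp
  have step: "y < nx y \<and> nx y < eta" if ye: "y < eta" for y
  proof -
    obtain z where z: "y < z" "z < eta" using lim[OF ye] by blast
    have "y < nx y" unfolding nx_def using z(1) by (rule LeastI)
    moreover have "nx y \<le> z" unfolding nx_def using z(1) by (rule Least_le)
    ultimately show ?thesis using z(2) by simp
  qed
  have xeta0: "x n < eta" for n
  proof (induction n)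
    case 0 then show ?case using x0 i0(1) by simp
  next
    case (Suc n) then show ?case using step xS by simp
  qed
  have xlt: "x n < eta \<and> x n < x (Suc n)" for n using xeta0[of n] step[of "x n"] xS by simp
  have smx: "strict_mono x" unfolding strict_mono_Suc_iff using xlt by blast
  have xeta: "x n < eta" for n using xlt by blast
  have ipx: "ipred (x n) (x (Suc n))" for n
    unfolding ipred_def
  proof (intro conjI notI)
    show "x n < x (Suc n)" using xlt by blast
  next
    assume "\<exists>y. x n < y \<and> y < x (Suc n)"
    then obtain y where y: "x n < y" "y < nx (x n)" unfolding xS by blast
    then show False unfolding nx_def using not_less_Least by blast
  qed
  define z where "z = enumerate {x. x < mu i0}"
  have smz: "strict_mono z" unfolding z_def by (rule strict_monoI) (use enumerate_mono i0(2) in blast)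
  have zlt: "z l < mu i0" for l unfolding z_def using enumerate_in_set[OF i0(2)] by simp
  have mux: "mu i0 \<le> mu (x n)" for n
  proof (cases "x n = i0")
    case True then show ?thesis by simp
  next
    case False
    have "x 0 \<le> x n" using smx strict_mono_less_eq by blast
    then have "i0 < x n" using False x0 by simp
    then show ?thesis using a5 xeta[of n] by (simp add: less_imp_le)
  qed
  define g where "g = (\<lambda>(n, l). (x n, z l))"
  have "emb {(i, j). i < eta \<and> j < mu i} S g" for S
    unfolding emb_def
  proof (intro conjI ballI)
    fix p assume "p \<in> S"
    obtain n l where p: "p = (n, l)" by (cases p)
    have "z l < mu (x n)" using zlt[of l] mux[of n] by simp
    then show "g p \<in> {(i, j). i < eta \<and> j < mu i}" using xeta p g_def by simp
  next
    fix p q assume "p \<in> S" "q \<in> S"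
    obtain n l where p: "p = (n, l)" by (cases p)
    obtain n' l' where q: "q = (n', l')" by (cases q)
    show "lexless (g p) (g q) = lexless p q"
      unfolding p q g_def lexless_def
      using strict_mono_less[OF smx] strict_mono_less[OF smz] strict_mono_eq[OF smx] by simp
  next
    fix p q assume "p \<in> S" "q \<in> S"
    obtain n l where p: "p = (n, l)" by (cases p)
    obtain n' l' where q: "q = (n', l')" by (cases q)
    show "(fst (g p) < fst (g q)) = (fst p < fst q)"
      unfolding p q g_def using strict_mono_less[OF smx] by simp
  next
    fix p q assume "p \<in> S" "q \<in> S"
    obtain n l where p: "p = (n, l)" by (cases p)
    obtain n' l' where q: "q = (n', l')" by (cases q)
    show "gt1 (fst q) \<longrightarrow> ipred (fst p) (fst q) \<longrightarrow> gt1 (fst (g q)) \<and> ipred (fst (g p)) (fst (g q))"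
    proof (intro impI)
      assume g1: "gt1 (fst q)" and ip: "ipred (fst p) (fst q)"
      from g1 obtain a b :: nat where "a < b" "b < n'" unfolding gt1_def q by auto
      then have n2: "2 \<le> n'" by simp
      from ip have "n < n'" "\<not> (\<exists>y. n < y \<and> y < n')" unfolding ipred_def p q by auto
      then have nn: "n' = Suc n"
      proof -
        assume a: "n < n'" "\<not> (\<exists>y. n < y \<and> y < n')"
        show "n' = Suc n"
        proof (rule ccontr)
          assume "n' \<noteq> Suc n"
          then have "Suc n < n'" using a(1) Suc_lessI by auto
          then show False using a(2) by auto
        qed
      qed
      have "x 0 < x 1" "x 1 < x n'" using strict_mono_less[OF smx] n2 by auto
      then have "gt1 (x n')" unfolding gt1_def by blast
      then show "gt1 (fst (g q)) \<and> ipred (fst (g p)) (fst (g q))"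
        unfolding p q g_def using ipx[of n] nn by simp
    qed
  qed
  then show ?thesis by blast
qed

lemma smono_iff:
  fixes f :: "'a::linorder \<Rightarrow> 'b::linorder"
  assumes "\<And>x y. x \<in> A \<Longrightarrow> y \<in> A \<Longrightarrow> x < y \<Longrightarrow> f x < f y" "x \<in> A" "y \<in> A"
  shows "(f x < f y \<longleftrightarrow> x < y) \<and> (f x = f y \<longleftrightarrow> x = y)"
  using assms by (metis less_irrefl linorder_neqE order.asym)

lemma card_less_mono:
  fixes A :: "'a::linorder set"
  assumes fA: "finite A" and xy: "x \<in> A" "x < y"
  shows "card {r\<in>A. r < x} < card {r\<in>A. r < y}"
proof (rule psubset_card_mono)
  show "finite {r\<in>A. r < y}" using fA by simp
  show "{r\<in>A. r < x} \<subset> {r\<in>A. r < y}"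
  proof
    show "{r\<in>A. r < x} \<subseteq> {r\<in>A. r < y}" using xy(2) by auto
    show "{r\<in>A. r < x} \<noteq> {r\<in>A. r < y}" using xy by auto
  qed
qed

lemma emb_star_to_C:
  fixes S :: "('a::linorder \<times> 'a) set"
  assumes fS: "finite S"
  shows "\<exists>g :: 'a \<times> 'a \<Rightarrow> nat \<times> nat. emb UNIV S g"
proof -
  define RS where "RS = fst ` S"
  define CSs where "CSs = snd ` S"
  have fR: "finite RS" and fC: "finite CSs" using fS unfolding RS_def CSs_def by auto
  define gap where "gap r \<longleftrightarrow> \<not> (\<exists>r'\<in>RS. ipred r r')" for r
  define k where "k j = card {j'\<in>CSs. j' < j}" for j
  define f where "f i = 2 + card {r\<in>RS. r < i} + card {r\<in>RS. r < i \<and> gap r}" for i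
  have smf: "f i1 < f i2" if "i1 \<in> RS" "i2 \<in> RS" "i1 < i2" for i1 i2
  proof -
    have "card {r\<in>RS. r < i1} < card {r\<in>RS. r < i2}" by (rule card_less_mono[OF fR that(1,3)])
    moreover have "card {r\<in>RS. r < i1 \<and> gap r} \<le> card {r\<in>RS. r < i2 \<and> gap r}"
      by (rule card_mono) (use fR that(3) in auto)
    ultimately show ?thesis unfolding f_def by simp
  qed
  have smk: "k j1 < k j2" if "j1 \<in> CSs" "j2 \<in> CSs" "j1 < j2" for j1 j2
    unfolding k_def by (rule card_less_mono[OF fC that(1,3)])
  define g where "g = (\<lambda>(i, j). (f i, k j))"
  have "emb UNIV S g"
    unfolding emb_def
  proof (intro conjI ballI)
    fix p assume "p \<in> S" then show "g p \<in> UNIV" by simp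
  next
    fix p q assume pS: "p \<in> S" and qS: "q \<in> S"
    obtain i1 j1 where p: "p = (i1, j1)" by (cases p)
    obtain i2 j2 where q: "q = (i2, j2)" by (cases q)
    have R: "i1 \<in> RS" "i2 \<in> RS" and C: "j1 \<in> CSs" "j2 \<in> CSs"
      using pS qS p q unfolding RS_def CSs_def by force+
    have fi: "(f i1 < f i2 \<longleftrightarrow> i1 < i2) \<and> (f i1 = f i2 \<longleftrightarrow> i1 = i2)" by (rule smono_iff[OF smf R])
    have kj: "(k j1 < k j2 \<longleftrightarrow> j1 < j2) \<and> (k j1 = k j2 \<longleftrightarrow> j1 = j2)" by (rule smono_iff[OF smk C])
    show "lexless (g p) (g q) = lexless p q"
      unfolding p q g_def lexless_def using fi kj by simp
  next
    fix p q assume pS: "p \<in> S" and qS: "q \<in> S"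
    obtain i1 j1 where p: "p = (i1, j1)" by (cases p)
    obtain i2 j2 where q: "q = (i2, j2)" by (cases q)
    have R: "i1 \<in> RS" "i2 \<in> RS"
      using pS qS p q unfolding RS_def by force+
    have fi: "(f i1 < f i2 \<longleftrightarrow> i1 < i2) \<and> (f i1 = f i2 \<longleftrightarrow> i1 = i2)" by (rule smono_iff[OF smf R])
    show "(fst (g p) < fst (g q)) = (fst p < fst q)"
      unfolding p q g_def using fi by simp
  next
    fix p q assume pS: "p \<in> S" and qS: "q \<in> S"
    obtain w j1 where p: "p = (w, j1)" by (cases p)
    obtain i j2 where q: "q = (i, j2)" by (cases q)
    have R: "w \<in> RS" "i \<in> RS"
      using pS qS p q unfolding RS_def by force+
    show "gt1 (fst q) \<longrightarrow> ipred (fst p) (fst q) \<longrightarrow> gt1 (fst (g q)) \<and> ipred (fst (g p)) (fst (g q))"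
    proof (intro impI)
      assume ip: "ipred (fst p) (fst q)"
      then have wi: "w < i" and nb: "\<And>r. \<not> (w < r \<and> r < i)" unfolding ipred_def p q by auto
      have A1: "{r\<in>RS. r < i} = insert w {r\<in>RS. r < w}"
      proof
        show "{r\<in>RS. r < i} \<subseteq> insert w {r\<in>RS. r < w}"
        proof
          fix r assume r: "r \<in> {r\<in>RS. r < i}"
          have "\<not> w < r" using nb[of r] r by auto
          then show "r \<in> insert w {r\<in>RS. r < w}" using r by (auto simp: not_less le_less)
        qed
        show "insert w {r\<in>RS. r < w} \<subseteq> {r\<in>RS. r < i}" using R wi by auto
      qed
      have ngw: "\<not> gap w" unfolding gap_def using R(2) ip p q by auto
      have A2: "{r\<in>RS. r < i \<and> gap r} = {r\<in>RS. r < w \<and> gap r}"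
      proof
        show "{r\<in>RS. r < i \<and> gap r} \<subseteq> {r\<in>RS. r < w \<and> gap r}"
        proof
          fix r assume r: "r \<in> {r\<in>RS. r < i \<and> gap r}"
          have "\<not> w < r" using nb[of r] r by auto
          moreover have "r \<noteq> w" using r ngw by auto
          ultimately show "r \<in> {r\<in>RS. r < w \<and> gap r}" using r by (auto simp: not_less le_less)
        qed
        show "{r\<in>RS. r < w \<and> gap r} \<subseteq> {r\<in>RS. r < i \<and> gap r}" using wi by auto
      qed
      have "card {r\<in>RS. r < i} = Suc (card {r\<in>RS. r < w})"
        unfolding A1 by (rule card_insert_disjoint) (use fR in auto)
      then have fS: "f i = Suc (f w)" unfolding f_def A2 by simp
      have "gt1 (f i)" unfolding gt1_def f_def by (rule exI[of _ 0], rule exI[of _ 1]) simp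
      moreover have "ipred (f w) (f i)" unfolding ipred_def fS by auto
      ultimately show "gt1 (fst (g q)) \<and> ipred (fst (g p)) (fst (g q))" unfolding p q g_def by simp
    qed
  qed
  then show ?thesis by blast
qed

theorem lemma4p2:
  fixes af :: "'f::countable \<Rightarrow> nat" and ar :: "'r::countable \<Rightarrow> nat" and lt :: 'r
    and lam eta :: "'o::wellorder" and mu :: "'o \<Rightarrow> 'o"
    and \<Gamma> :: "(('f,'r) ssym,'r) fm set"
  assumes "ar lt = 2"
    and "singular_cardinal lam"
    and "eta = cofinality lam"
    and "\<forall>i<eta. is_cardinal (mu i) \<and> mu i < lam"
    and "\<forall>i i'. i < i' \<and> i' < eta \<longrightarrow> mu i < mu i'"
    and "\<forall>y<lam. \<exists>i<eta. y < mu i"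
    and "\<forall>\<phi>\<in>\<Gamma>. wff af ar \<phi> \<and> fvf \<phi> = {}"
  shows "consistent_C af ar lt eta mu \<Gamma> \<longleftrightarrow> consistent_Cstar af ar lt \<Gamma> TYPE('o)"
proof -
  have infl: "infinite {x. x < lam}" using assms(2) unfolding singular_cardinal_def by auto
  then have inf: "infinite (UNIV :: 'o set)" by (rule infinite_super[OF subset_UNIV])
  have wfG: "\<forall>\<phi>\<in>\<Gamma>. wff af ar \<phi>" using assms(7) by blast
  obtain nn :: "nat \<Rightarrow> 'o" where inn: "inj nn" using infinite_countable_subset[OF inf] by blast
  obtain h1 :: "(('f,'r) ssym + (nat \<times> nat)) trm \<Rightarrow> ('f,'r,'o) asym" where h1: "inj h1"
    using ex_term_inj[OF inf inn] by blast
  obtain h2 :: "(('f,'r) ssym + ('o \<times> 'o)) trm \<Rightarrow> ('f,'r,'o) asym" where h2: "inj h2"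
    using ex_term_inj[OF inf inj_on_id] by blast
  have ci1: "inj (\<lambda>(i, j). CS i j :: ('f,'r,'o) asym)" by (auto simp: inj_def)
  have ci2: "inj (\<lambda>(i, j). CC i j :: ('f,'r,'o) asym)" by (auto simp: inj_def)
  have cl1: "\<And>p s. (\<lambda>(i, j). CS i j :: ('f,'r,'o) asym) p \<noteq> LS s" by (auto split: prod.splits)
  have cl2: "\<And>p s. (\<lambda>(i, j). CC i j :: ('f,'r,'o) asym) p \<noteq> LS s" by (auto split: prod.splits)
  show ?thesis
  proof
    assume "consistent_C af ar lt eta mu \<Gamma>"
    then obtain D :: "('f,'r,'o) asym set" and F R where
      M: "model_of af ar lt \<Gamma> {(i, j). i < eta \<and> j < mu i} (\<lambda>(i, j). CC i j) D F R"
      unfolding consistent_C_def by blast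
    obtain g0 :: "nat \<times> nat \<Rightarrow> 'o \<times> 'o" where g0: "\<forall>S. emb {(i, j). i < eta \<and> j < mu i} S g0"
      using emb_C_to_star[OF assms(2,3,5,6)] by blast
    have E: "\<And>S :: (nat \<times> nat) set. finite S \<Longrightarrow> S \<subseteq> UNIV \<Longrightarrow> \<exists>g. emb {(i, j). i < eta \<and> j < mu i} S g"
      using g0 by blast
    have "\<exists>D' F' R'. model_of af ar lt \<Gamma> (UNIV :: (nat \<times> nat) set) (\<lambda>(i, j). CS i j :: ('f,'r,'o) asym) D' F' R'"
      by (rule transfer[OF M h1 ci1 cl1 E wfG]) auto
    then show "consistent_Cstar af ar lt \<Gamma> TYPE('o)" unfolding consistent_Cstar_def by blast
  next
    assume "consistent_Cstar af ar lt \<Gamma> TYPE('o)"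
    then obtain D :: "('f,'r,'o) asym set" and F R where
      M: "model_of af ar lt \<Gamma> (UNIV :: (nat \<times> nat) set) (\<lambda>(i, j). CS i j) D F R"
      unfolding consistent_Cstar_def by blast
    have "\<exists>D' F' R'. model_of af ar lt \<Gamma> {(i, j). i < eta \<and> j < mu i} (\<lambda>(i, j). CC i j :: ('f,'r,'o) asym) D' F' R'"
    proof (rule transfer[OF M h2 ci2 cl2 _ wfG])
      fix S :: "('o \<times> 'o) set" assume "finite S"
      then show "\<exists>g. emb (UNIV :: (nat \<times> nat) set) S g" by (rule emb_star_to_C)
    qed
    then show "consistent_C af ar lt eta mu \<Gamma>" unfolding consistent_C_def by blast
  qed
qed

end
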